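(* Fix $m\in\mathbb{N}$, $\rho\in\mathbb{R}$, and $\alpha\in(0,e^{-\rho}(m\pi)^{-1/2})$. For each $n\ge1$ let \[K_n(x)=\frac{e^{n\rho}}{\binom{m-1+n/2}{m-1}}\,L_{m-1}^{n/2}\!\left(\frac1m\left|\frac x\alpha\right|^2\right)e^{-|x/\alpha|^2/m},\qquad x\in\mathbb{R}^n,\] and let $X_n$ be a random vector in $\mathbb{R}^n$ with probability density $K_n(x)^2/\|K_n\|_2^2$. Then the sequence $\{|X_n|/\sqrt n\}_n$ satisfies a large deviation principle (speed $n$) with rate function \[\Lambda^*(x)=\frac{2x^2}{\alpha^2m}-\frac12+\frac12\log\left(\frac{\alpha^2m}{4x^2}\right),\quad x>0.\]
   Context: $L_m^{\beta}(r)=\sum_{k=0}^m\binom{m+\beta}{m-k}\frac{(-r)^k}{k!}$ denotes the generalized Laguerre polynomial, with $\binom{a}{j}$ the generalized binomial coefficient for real $a$. $\log$ is the natural logarithm. A sequence $Y_n$ satisfies an LDP with rate function $I$ if for all Borel $A$, $-\inf_{A^\circ}I\le\liminf\frac1n\ln\mathbb{P}(Y_n\in A)\le\limsup\frac1n\ln\mathbb{P}(Y_n\in A)\le-\inf_{\bar A}I$. *)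

theory Defs
  imports "HOL-Probability.Probability"
begin

definition laguerre :: "nat \<Rightarrow> real \<Rightarrow> real \<Rightarrow> real" where
  "laguerre m \<beta> r = (\<Sum>k=0..m. ((real m + \<beta>) gchoose (m - k)) * (- r) ^ k / fact k)"

text \<open>Squared Euclidean norm of a vector in R^n, represented as a function nat => real
  on the coordinates 0..n-1.\<close>
definition sqnorm :: "nat \<Rightarrow> (nat \<Rightarrow> real) \<Rightarrow> real" where
  "sqnorm n x = (\<Sum>i<n. (x i)^2)"

definition Rn :: "nat \<Rightarrow> (nat \<Rightarrow> real) measure" where
  "Rn n = PiM {..<n} (\<lambda>_. lborel)"

definition ln_ereal :: "real \<Rightarrow> ereal" where
  "ln_ereal p = (if p \<le> 0 then -\<infinity> else ereal (ln p))"

definition LDP :: "(nat \<Rightarrow> 'a measure) \<Rightarrow> (nat \<Rightarrow> 'a \<Rightarrow> real) \<Rightarrow> (real \<Rightarrow> ereal) \<Rightarrow> bool" where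
  "LDP M Y I \<longleftrightarrow> (\<forall>A \<in> sets borel.
     let p = (\<lambda>n. ereal (1 / real n) * ln_ereal (measure (M n) {\<omega> \<in> space (M n). Y n \<omega> \<in> A}))
     in - (INF x\<in>interior A. I x) \<le> liminf p
        \<and> liminf p \<le> limsup p
        \<and> limsup p \<le> - (INF x\<in>closure A. I x))"

definition Kn :: "nat \<Rightarrow> real \<Rightarrow> real \<Rightarrow> nat \<Rightarrow> (nat \<Rightarrow> real) \<Rightarrow> real" where
  "Kn m \<rho> \<alpha> n x =
     exp (real n * \<rho>) / ((real m - 1 + real n / 2) gchoose (m - 1))
     * laguerre (m - 1) (real n / 2) (sqnorm n x / \<alpha>^2 / real m)
     * exp (- (sqnorm n x / \<alpha>^2) / real m)"

definition rate :: "nat \<Rightarrow> real \<Rightarrow> real \<Rightarrow> ereal" where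
  "rate m \<alpha> x = (if x > 0 then
      ereal (2 * x^2 / (\<alpha>^2 * real m) - 1/2 + 1/2 * ln (\<alpha>^2 * real m / (4 * x^2)))
    else \<infinity>)"

end

theory Submission
  imports Defs "HOL-Computational_Algebra.Fundamental_Theorem_Algebra" "HOL-Real_Asymp.Real_Asymp"
begin

lemma gauss_nn1:
  assumes a: "0 < a"
  shows "(\<integral>\<^sup>+x. ennreal (exp (- a * x\<^sup>2)) \<partial>lborel) = ennreal (sqrt (pi / a))"
proof -
  define \<sigma> where "\<sigma> = sqrt (1 / (2 * a))"
  have s: "0 < \<sigma>" using a by (simp add: \<sigma>_def)
  have s2: "\<sigma>\<^sup>2 = 1 / (2 * a)" using a by (simp add: \<sigma>_def)
  have eq: "\<And>x. normal_density 0 \<sigma> x = sqrt (a / pi) * exp (- a * x\<^sup>2)"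
    unfolding normal_density_def s2 using a
    by (simp add: field_simps real_sqrt_divide)
  have "(\<integral>\<^sup>+x. ennreal (normal_density 0 \<sigma> x) \<partial>lborel) = ennreal 1"
    by (subst nn_integral_eq_integral) (auto simp: s)
  moreover have "(\<lambda>x. ennreal (sqrt (a / pi)) * ennreal (exp (- a * x\<^sup>2))) = (\<lambda>x. ennreal (normal_density 0 \<sigma> x))"
    using a by (intro ext, unfold eq, subst ennreal_mult) auto
  ultimately have "(\<integral>\<^sup>+x. ennreal (sqrt (a / pi)) * ennreal (exp (- a * x\<^sup>2)) \<partial>lborel) = 1"
    by simp
  hence "ennreal (sqrt (a / pi)) * (\<integral>\<^sup>+x. ennreal (exp (- a * x\<^sup>2)) \<partial>lborel) = 1"
    by (subst (asm) nn_integral_cmult) auto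
  moreover have sc: "ennreal (sqrt (pi / a)) * ennreal (sqrt (a / pi)) = 1"
    using a by (subst ennreal_mult[symmetric]) (auto simp: real_sqrt_mult[symmetric])
  ultimately have "ennreal (sqrt (pi / a)) * (ennreal (sqrt (a / pi)) * (\<integral>\<^sup>+x. ennreal (exp (- a * x\<^sup>2)) \<partial>lborel)) = ennreal (sqrt (pi / a))"
    by simp
  thus ?thesis by (simp add: mult.assoc[symmetric] sc)
qed

lemma measurable_sqnorm[measurable]: "sqnorm n \<in> borel_measurable (Rn n)"
  unfolding sqnorm_def Rn_def by measurable

lemma gauss_nnRn:
  assumes a: "0 < a"
  shows "(\<integral>\<^sup>+x. ennreal (exp (- a * sqnorm n x)) \<partial>Rn n) = ennreal (sqrt (pi / a) ^ n)"
proof -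
  interpret product_sigma_finite "\<lambda>_. lborel :: real measure" by standard
  have "\<And>x. ennreal (exp (- a * sqnorm n x)) = (\<Prod>i\<in>{..<n}. ennreal (exp (- a * (x i)\<^sup>2)))"
    unfolding sqnorm_def
    by (simp add: sum_distrib_left exp_sum prod_ennreal[symmetric] sum_negf[symmetric])
  hence "(\<integral>\<^sup>+x. ennreal (exp (- a * sqnorm n x)) \<partial>Rn n)
       = (\<integral>\<^sup>+x. (\<Prod>i\<in>{..<n}. ennreal (exp (- a * (x i)\<^sup>2))) \<partial>Rn n)" by simp
  also have "\<dots> = (\<Prod>i\<in>{..<n}. \<integral>\<^sup>+y. ennreal (exp (- a * y\<^sup>2)) \<partial>lborel)"
    unfolding Rn_def
    using product_nn_integral_prod[of "{..<n}" "\<lambda>i y. ennreal (exp (- a * y\<^sup>2))"] by simp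
  also have "\<dots> = ennreal (sqrt (pi / a) ^ n)"
    using gauss_nn1[OF a] ennreal_power[of "sqrt (pi / a)" n] a by simp
  finally show ?thesis .
qed

lemma norm_prod_mset_complex: "norm (\<Prod>z\<in>#R. f z :: complex) = (\<Prod>z\<in>#R. norm (f z))"
  by (induction R) (auto simp: norm_mult)

lemma prod_mset_lower:
  fixes f :: "'a \<Rightarrow> real"
  assumes "0 \<le> c" "\<And>z. z \<in># R \<Longrightarrow> c \<le> f z"
  shows "c ^ size R \<le> (\<Prod>z\<in>#R. f z)"
  using assms(2)
proof (induction R)
  case empty thus ?case by simp
next
  case (add x R)
  have "c ^ size R \<le> (\<Prod>z\<in>#R. f z)" using add by auto
  moreover have "c \<le> f x" using add by auto
  ultimately show ?case using assms(1)
    by (simp add: mult_mono)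
qed

lemma poly_factor_abs:
  fixes cf :: "nat \<Rightarrow> real" and d :: nat
  assumes nz: "cf d \<noteq> 0"
  shows "\<exists>R::complex multiset. size R = d \<and>
    (\<forall>u::real. \<bar>\<Sum>k\<le>d. cf k * u ^ k\<bar> = \<bar>cf d\<bar> * (\<Prod>z\<in>#R. cmod (complex_of_real u - z)))"
proof -
  define p where "p = (\<Sum>k\<le>d. monom (complex_of_real (cf k)) k)"
  have cp: "coeff p k = (if k \<le> d then complex_of_real (cf k) else 0)" for k
    unfolding p_def coeff_sum by (auto simp: coeff_monom)
  have dp: "degree p = d"
  proof (rule antisym)
    show "degree p \<le> d" by (rule degree_le) (auto simp: cp)
    show "d \<le> degree p" by (rule le_degree) (simp add: cp nz)
  qed
  have lc: "lead_coeff p = complex_of_real (cf d)" by (simp add: dp cp)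
  have pv: "poly p (complex_of_real u) = complex_of_real (\<Sum>k\<le>d. cf k * u ^ k)" for u
    unfolding p_def poly_sum by (simp add: poly_monom)
  define R where "R = proots p"
  have sR: "size R = d" by (simp add: R_def size_proots_complex dp)
  have dec: "smult (lead_coeff p) (\<Prod>x\<in>#R. [:-x, 1:]) = p"
    unfolding R_def by (rule complex_poly_decompose_multiset)
  have "\<bar>\<Sum>k\<le>d. cf k * u ^ k\<bar> = \<bar>cf d\<bar> * (\<Prod>z\<in>#R. cmod (complex_of_real u - z))" for u
  proof -
    have "\<bar>\<Sum>k\<le>d. cf k * u ^ k\<bar> = cmod (poly p (complex_of_real u))"
      by (simp only: pv norm_of_real)
    also have "\<dots> = cmod (poly (smult (lead_coeff p) (\<Prod>x\<in>#R. [:-x, 1:])) (complex_of_real u))"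
      by (simp add: dec)
    also have "\<dots> = \<bar>cf d\<bar> * (\<Prod>z\<in>#R. cmod (complex_of_real u - z))"
      by (simp add: lc poly_prod_mset norm_mult norm_prod_mset_complex)
    finally show ?thesis .
  qed
  with sR show ?thesis by blast
qed

lemma poly_lower_bound:
  fixes cf :: "nat \<Rightarrow> real" and d :: nat
  assumes nz: "cf d \<noteq> 0"
  shows "\<exists>R::complex multiset. size R = d \<and>
    (\<forall>u::real. \<forall>h\<ge>0. (\<forall>z\<in>#R. h \<le> \<bar>u - Re z\<bar>) \<longrightarrow> \<bar>cf d\<bar> * h ^ d \<le> \<bar>\<Sum>k\<le>d. cf k * u ^ k\<bar>)"
proof -
  obtain R :: "complex multiset" where sR: "size R = d" and
    eq: "\<And>u::real. \<bar>\<Sum>k\<le>d. cf k * u ^ k\<bar> = \<bar>cf d\<bar> * (\<Prod>z\<in>#R. cmod (complex_of_real u - z))"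
    using poly_factor_abs[of cf d, OF nz] by blast
  have "\<bar>cf d\<bar> * h ^ d \<le> \<bar>\<Sum>k\<le>d. cf k * u ^ k\<bar>"
    if h: "0 \<le> h" and hz: "\<forall>z\<in>#R. h \<le> \<bar>u - Re z\<bar>" for u h
  proof -
    have "\<And>z. z \<in># R \<Longrightarrow> h \<le> cmod (complex_of_real u - z)"
    proof -
      fix z assume "z \<in># R"
      hence "h \<le> \<bar>u - Re z\<bar>" using hz by auto
      also have "\<dots> = \<bar>Re (complex_of_real u - z)\<bar>" by simp
      also have "\<dots> \<le> cmod (complex_of_real u - z)" by (rule abs_Re_le_cmod)
      finally show "h \<le> cmod (complex_of_real u - z)" .
    qed
    hence "h ^ size R \<le> (\<Prod>z\<in>#R. cmod (complex_of_real u - z))"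
      by (intro prod_mset_lower h)
    thus ?thesis unfolding eq sR by (simp add: mult_left_mono)
  qed
  with sR show ?thesis by blast
qed

lemma pigeon_interval:
  fixes R :: "complex multiset" and m n :: nat and t1 h :: real
  assumes sz: "size R < m" and h: "0 < h" and n: "1 \<le> n"
  shows "\<exists>j<m. \<forall>z\<in>#R. 2*h/3 \<le> \<bar>Re z / real n - (t1 + (2 * real j + 1) * h)\<bar>"
proof -
  define s where "s j = t1 + (2 * real j + 1) * h" for j :: nat
  define near where "near z j \<longleftrightarrow> j < m \<and> \<bar>Re z / real n - s j\<bar> < 2*h/3" for z j
  have uniq: "j = j'" if "near z j" "near z j'" for z j j'
  proof (rule ccontr)
    assume "j \<noteq> j'"
    hence "1 \<le> \<bar>real j - real j'\<bar>" by linarith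
    moreover have "s j - s j' = 2 * h * (real j - real j')" by (simp add: s_def algebra_simps)
    ultimately have "2 * h \<le> \<bar>s j - s j'\<bar>" using h by (simp add: abs_mult)
    moreover have "\<bar>s j - s j'\<bar> < 4*h/3" using that unfolding near_def by linarith
    ultimately show False using h by linarith
  qed
  define g where "g z = (THE j. near z j)" for z
  define bad where "bad = {j. j < m \<and> (\<exists>z\<in>#R. near z j)}"
  have "bad \<subseteq> g ` set_mset R"
  proof
    fix j assume "j \<in> bad"
    then obtain z where z: "z \<in># R" "near z j" unfolding bad_def by auto
    hence "g z = j" unfolding g_def using uniq by blast
    thus "j \<in> g ` set_mset R" using z by blast
  qed
  hence "card bad \<le> card (set_mset R)"
    by (meson card_image_le card_mono finite_imageI finite_set_mset order_trans)
  also have "\<dots> \<le> size R" by (induction R) (auto simp: card_insert_if)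
  finally have "card bad < m" using sz by linarith
  have fb: "finite bad" unfolding bad_def by auto
  have "\<not> {..<m} \<subseteq> bad"
  proof
    assume "{..<m} \<subseteq> bad"
    from card_mono[OF fb this] show False using \<open>card bad < m\<close> by simp
  qed
  then obtain j where "j < m" "j \<notin> bad" by auto
  hence "\<forall>z\<in>#R. 2*h/3 \<le> \<bar>Re z / real n - s j\<bar>" unfolding bad_def near_def by auto
  thus ?thesis using \<open>j < m\<close> unfolding s_def by blast
qed

definition Lg :: "nat \<Rightarrow> real \<Rightarrow> nat \<Rightarrow> real \<Rightarrow> real" where
  "Lg m \<alpha> n u = laguerre (m - 1) (real n / 2) (u / \<alpha>^2 / real m)"

definition cfL :: "nat \<Rightarrow> real \<Rightarrow> nat \<Rightarrow> nat \<Rightarrow> real" where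
  "cfL m \<alpha> n k = ((real (m - 1) + real n / 2) gchoose (m - 1 - k)) * (-1)^k / (fact k * (\<alpha>^2 * real m)^k)"

lemma Lg_poly:
  assumes "1 \<le> m" "0 < \<alpha>"
  shows "Lg m \<alpha> n u = (\<Sum>k\<le>m-1. cfL m \<alpha> n k * u ^ k)"
  unfolding Lg_def laguerre_def cfL_def atLeast0AtMost
proof (rule sum.cong[OF refl])
  fix k
  have "(- (u / \<alpha>^2 / real m)) ^ k = (-1)^k * u^k / (\<alpha>^2 * real m)^k"
    by (simp add: power_minus' power_divide field_simps power_mult_distrib)
  thus "((real (m - 1) + real n / 2) gchoose (m - 1 - k)) * (- (u / \<alpha>\<^sup>2 / real m)) ^ k / fact k =
        ((real (m - 1) + real n / 2) gchoose (m - 1 - k)) * (- 1) ^ k / (fact k * (\<alpha>\<^sup>2 * real m) ^ k) * u ^ k"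
    by (simp add: field_simps)
qed

lemma cfL_top_nz:
  assumes "1 \<le> m" "0 < \<alpha>"
  shows "cfL m \<alpha> n (m - 1) = (-1)^(m-1) / (fact (m-1) * (\<alpha>^2 * real m)^(m-1))"
    and "cfL m \<alpha> n (m - 1) \<noteq> 0"
  using assms by (auto simp: cfL_def)

lemma Lg_lower:
  assumes m: "1 \<le> m" and a: "0 < \<alpha>" and h: "0 < h"
  shows "\<exists>c>0. \<forall>n\<ge>1. \<exists>j<m. \<forall>v. \<bar>v - (t1 + (2 * real j + 1) * h)\<bar> \<le> h/3
            \<longrightarrow> c \<le> (Lg m \<alpha> (n::nat) (real n * v))\<^sup>2"
proof -
  define ct where "ct = \<bar>(-1::real)^(m-1) / (fact (m-1) * (\<alpha>^2 * real m)^(m-1))\<bar>"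
  have ctpos: "0 < ct" unfolding ct_def using m a by auto
  define c where "c = (ct * (h/3)^(m-1))\<^sup>2"
  have cpos: "0 < c" unfolding c_def using ctpos h by auto
  have "\<exists>j<m. \<forall>v. \<bar>v - (t1 + (2 * real j + 1) * h)\<bar> \<le> h/3
            \<longrightarrow> c \<le> (Lg m \<alpha> n (real n * v))\<^sup>2" if n: "1 \<le> n" for n :: nat
  proof -
    obtain R :: "complex multiset" where sR: "size R = m - 1" and
      lb: "\<And>u h. 0 \<le> h \<Longrightarrow> (\<forall>z\<in>#R. h \<le> \<bar>u - Re z\<bar>) \<Longrightarrow>
          \<bar>cfL m \<alpha> n (m-1)\<bar> * h ^ (m-1) \<le> \<bar>\<Sum>k\<le>m-1. cfL m \<alpha> n k * u ^ k\<bar>"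
      using poly_lower_bound[of "cfL m \<alpha> n" "m - 1", OF cfL_top_nz(2)[OF m a]] by blast
    obtain j where j: "j < m" and
      far: "\<forall>z\<in>#R. 2*h/3 \<le> \<bar>Re z / real n - (t1 + (2 * real j + 1) * h)\<bar>"
      using pigeon_interval[of R m h n t1] sR m h n by auto
    have "c \<le> (Lg m \<alpha> n (real n * v))\<^sup>2" if v: "\<bar>v - (t1 + (2 * real j + 1) * h)\<bar> \<le> h/3" for v
    proof -
      have "\<forall>z\<in>#R. h/3 \<le> \<bar>real n * v - Re z\<bar>"
      proof
        fix z assume "z \<in># R"
        hence "2*h/3 \<le> \<bar>Re z / real n - (t1 + (2 * real j + 1) * h)\<bar>" using far by auto
        hence "h/3 \<le> \<bar>v - Re z / real n\<bar>" using v by linarith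
        also have "\<dots> \<le> real n * \<bar>v - Re z / real n\<bar>" using n by (simp add: mult_le_cancel_right1)
        also have "\<dots> = \<bar>real n * v - Re z\<bar>"
        proof -
          have "real n * v - Re z = real n * (v - Re z / real n)" using n by (simp add: field_simps)
          thus ?thesis by (simp add: abs_mult)
        qed
        finally show "h/3 \<le> \<bar>real n * v - Re z\<bar>" .
      qed
      from lb[OF _ this] h
      have "ct * (h/3) ^ (m-1) \<le> \<bar>Lg m \<alpha> n (real n * v)\<bar>"
        using cfL_top_nz(1)[OF m a, of n] by (simp add: Lg_poly[OF m a] ct_def)
      moreover have "0 \<le> ct * (h/3) ^ (m-1)" using ctpos h by simp
      ultimately show ?thesis unfolding c_def
        by (metis abs_le_square_iff abs_of_nonneg)
    qed
    thus ?thesis using j by blast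
  qed
  thus ?thesis using cpos by blast
qed

lemma pow_fact_le_exp:
  fixes y :: real assumes "0 \<le> y"
  shows "y ^ k / fact k \<le> exp y"
proof -
  have s: "(\<lambda>n. y^n /\<^sub>R fact n) sums exp y" by (rule exp_converges)
  have "(\<Sum>n\<in>{k}. y^n /\<^sub>R fact n) \<le> (\<Sum>n. y^n /\<^sub>R fact n)"
    by (rule sum_le_suminf) (use s assms in \<open>auto simp: sums_iff\<close>)
  thus ?thesis using s by (simp add: sums_iff divide_inverse mult.commute)
qed

lemma gchoose_abs_le:
  fixes r :: real assumes "0 \<le> r"
  shows "\<bar>r gchoose j\<bar> \<le> (r + real j) ^ j"
proof -
  have "\<bar>\<Prod>i=0..<j. r - of_nat i\<bar> = (\<Prod>i=0..<j. \<bar>r - of_nat i\<bar>)" by (rule abs_prod)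
  also have "\<dots> \<le> (\<Prod>i=0..<j. r + real j)"
    by (rule prod_mono) (use assms in auto)
  also have "\<dots> = (r + real j) ^ j" by simp
  finally have A: "\<bar>\<Prod>i=0..<j. r - of_nat i\<bar> \<le> (r + real j) ^ j" .
  have "\<bar>r gchoose j\<bar> = \<bar>\<Prod>i=0..<j. r - of_nat i\<bar> / fact j"
    by (simp add: gbinomial_prod_rev abs_divide)
  also have "\<dots> \<le> \<bar>\<Prod>i=0..<j. r - of_nat i\<bar>"
    using divide_left_mono[of 1 "fact j" "\<bar>\<Prod>i=0..<j. r - of_nat i\<bar>"] by (simp add: fact_ge_1)
  finally show ?thesis using A by linarith
qed

lemma pow_le_max_pow:
  fixes x B :: real assumes "0 \<le> x" "max 1 x \<le> B" "j \<le> M"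
  shows "x ^ j \<le> B ^ M"
proof -
  have "x ^ j \<le> (max 1 x) ^ j" using assms by (simp add: power_mono)
  also have "\<dots> \<le> (max 1 x) ^ M" using assms by (simp add: power_increasing)
  also have "\<dots> \<le> B ^ M" using assms by (simp add: power_mono)
  finally show ?thesis .
qed

lemma Lg_upper:
  assumes m: "1 \<le> m" and a: "0 < \<alpha>" and e: "0 < \<epsilon>"
  shows "\<exists>C\<ge>0. \<forall>n u. 0 \<le> u \<longrightarrow> (Lg m \<alpha> n u)\<^sup>2 \<le> C * (real n + 1) ^ (2 * (m - 1)) * exp (\<epsilon> * u)"
proof -
  define M where "M = m - 1"
  define A where "A = \<alpha>^2 * real m"
  have Apos: "0 < A" unfolding A_def using a m by auto
  define \<delta> where "\<delta> = min 1 (\<epsilon> * A / 2)"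
  have dpos: "0 < \<delta>" and d1: "\<delta> \<le> 1" and d2: "2 * \<delta> \<le> \<epsilon> * A"
    unfolding \<delta>_def using e Apos by auto
  define C0 where "C0 = real (M + 1) * real (2 * M + 1) ^ M * (1 / \<delta>) ^ M"
  have C0: "0 \<le> C0" unfolding C0_def using dpos by simp
  have bound: "\<bar>Lg m \<alpha> n u\<bar> \<le> C0 * (real n + 1) ^ M * exp (\<delta> * (u / A))" if u: "0 \<le> u" for n u
  proof -
    define y where "y = u / A"
    have y: "0 \<le> y" unfolding y_def using u Apos by simp
    have tm: "\<bar>cfL m \<alpha> n k * u ^ k\<bar> \<le> (real (2 * M + 1) * (real n + 1)) ^ M * ((1 / \<delta>) ^ M * exp (\<delta> * y))"
      if k: "k \<le> M" for k
    proof -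
      define r where "r = real (m - 1) + real n / 2"
      have r: "0 \<le> r" unfolding r_def by simp
      have g: "\<bar>r gchoose (M - k)\<bar> \<le> (real (2 * M + 1) * (real n + 1)) ^ M"
      proof -
        have "\<bar>r gchoose (M - k)\<bar> \<le> (r + real (M - k)) ^ (M - k)" by (rule gchoose_abs_le[OF r])
        also have "\<dots> \<le> (real (2 * M + 1) * (real n + 1)) ^ M"
        proof (rule pow_le_max_pow)
          show "0 \<le> r + real (M - k)" using r by simp
          show "M - k \<le> M" by simp
          have r1: "r + real (M - k) \<le> 2 * real M + real n"
          proof -
            have "real (M - k) \<le> real M" by simp
            moreover have "r = real M + real n / 2" unfolding r_def M_def by simp
            ultimately show ?thesis by simp
          qed
          have p0: "0 \<le> real M * real n" by simp
          have r2: "2 * real M + real n \<le> real (2 * M + 1) * (real n + 1)"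
            using p0 by (simp add: algebra_simps)
          have "r + real (M - k) \<le> real (2 * M + 1) * (real n + 1)" using r1 r2 by linarith
          moreover have "1 \<le> real (2 * M + 1) * (real n + 1)"
            using p0 by (simp add: algebra_simps)
          ultimately show "max 1 (r + real (M - k)) \<le> real (2 * M + 1) * (real n + 1)" by simp
        qed
        finally show ?thesis .
      qed
      have yk: "y ^ k / fact k \<le> (1 / \<delta>) ^ M * exp (\<delta> * y)"
      proof -
        have "y ^ k / fact k = (1 / \<delta>) ^ k * ((\<delta> * y) ^ k / fact k)"
          using dpos by (simp add: power_mult_distrib field_simps)
        also have "\<dots> \<le> (1 / \<delta>) ^ M * exp (\<delta> * y)"
        proof (rule mult_mono)
          show "(1 / \<delta>) ^ k \<le> (1 / \<delta>) ^ M"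
            using dpos d1 k by (intro power_increasing) (auto simp: field_simps)
          show "(\<delta> * y) ^ k / fact k \<le> exp (\<delta> * y)" using dpos y by (intro pow_fact_le_exp) simp
        qed (use dpos y in auto)
        finally show ?thesis .
      qed
      have "\<bar>cfL m \<alpha> n k * u ^ k\<bar> = \<bar>r gchoose (M - k)\<bar> * (y ^ k / fact k)"
        unfolding cfL_def r_def y_def A_def M_def using u a m
        by (simp add: abs_mult abs_divide power_divide field_simps)
      also have "\<dots> \<le> (real (2 * M + 1) * (real n + 1)) ^ M * ((1 / \<delta>) ^ M * exp (\<delta> * y))"
        by (rule mult_mono[OF g yk]) (use y in auto)
      finally show ?thesis .
    qed
    have "\<bar>Lg m \<alpha> n u\<bar> \<le> (\<Sum>k\<le>M. \<bar>cfL m \<alpha> n k * u ^ k\<bar>)"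
      unfolding Lg_poly[OF m a] M_def by (rule sum_abs)
    also have "\<dots> \<le> (\<Sum>k\<le>M. (real (2 * M + 1) * (real n + 1)) ^ M * ((1 / \<delta>) ^ M * exp (\<delta> * y)))"
      by (rule sum_mono) (rule tm, simp)
    also have "\<dots> = C0 * (real n + 1) ^ M * exp (\<delta> * (u / A))"
      unfolding C0_def y_def sum_constant card_atMost power_mult_distrib by (simp only: ac_simps Suc_eq_plus1)
    finally show ?thesis .
  qed
  define C where "C = C0\<^sup>2"
  have "(Lg m \<alpha> n u)\<^sup>2 \<le> C * (real n + 1) ^ (2 * (m - 1)) * exp (\<epsilon> * u)" if u: "0 \<le> u" for n u
  proof -
    have "(Lg m \<alpha> n u)\<^sup>2 = \<bar>Lg m \<alpha> n u\<bar>\<^sup>2" by simp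
    also have "\<dots> \<le> (C0 * (real n + 1) ^ M * exp (\<delta> * (u / A)))\<^sup>2"
      by (rule power_mono[OF bound[OF u]]) simp
    also have "\<dots> = C * (real n + 1) ^ (2 * M) * exp (2 * \<delta> * (u / A))"
    proof -
      have e: "exp (2 * \<delta> * (u / A)) = exp (\<delta> * (u / A)) * exp (\<delta> * (u / A))"
        by (simp add: exp_add[symmetric])
      have p: "(real n + 1) ^ (2 * M) = (real n + 1) ^ M * (real n + 1) ^ M"
        by (simp add: power_add[symmetric] mult_2)
      show ?thesis unfolding e p C_def power2_eq_square by (simp only: ac_simps)
    qed
    also have "\<dots> \<le> C * (real n + 1) ^ (2 * M) * exp (\<epsilon> * u)"
    proof (rule mult_left_mono)
      have "2 * \<delta> * (u / A) \<le> \<epsilon> * A * (u / A)" using d2 u Apos by (intro mult_right_mono) auto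
      also have "\<dots> = \<epsilon> * u" using Apos by simp
      finally show "exp (2 * \<delta> * (u / A)) \<le> exp (\<epsilon> * u)" by simp
    qed (simp add: C_def)
    finally show ?thesis unfolding M_def .
  qed
  moreover have "0 \<le> C" unfolding C_def by simp
  ultimately show ?thesis by blast
qed

lemma gauss_nnRn_c:
  assumes b: "0 < b" and c: "0 \<le> c"
  shows "(\<integral>\<^sup>+x. ennreal (c * exp (- b * sqnorm n x)) \<partial>Rn n) = ennreal (c * sqrt (pi / b) ^ n)"
proof -
  have "(\<integral>\<^sup>+x. ennreal (c * exp (- b * sqnorm n x)) \<partial>Rn n) = (\<integral>\<^sup>+x. ennreal c * ennreal (exp (- b * sqnorm n x)) \<partial>Rn n)"
    using c by (intro nn_integral_cong) (simp add: ennreal_mult)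
  also have "\<dots> = ennreal c * (\<integral>\<^sup>+x. ennreal (exp (- b * sqnorm n x)) \<partial>Rn n)"
    by (rule nn_integral_cmult) simp
  also have "\<dots> = ennreal (c * sqrt (pi / b) ^ n)" using gauss_nnRn[OF b, of n] c b by (simp add: ennreal_mult)
  finally show ?thesis .
qed

lemma sqnorm_nonneg: "0 \<le> sqnorm n x"
  unfolding sqnorm_def by (simp add: sum_nonneg)

lemma sqrt_exp_ln: "0 < y \<Longrightarrow> sqrt y = exp (ln y / 2)"
  by (simp add: powr_half_sqrt[symmetric] powr_def)

lemma q_bounds:
  assumes d: "0 < d" "d < 1"
  shows "exp (- (d/4) * (1 + d) / 2) * sqrt (1 / (1 - d/4)) \<le> exp (- (d\<^sup>2 / 16))"
    and "exp ((d/4) * (1 - d) / 2) * sqrt (1 / (1 + d/4)) \<le> exp (- (d\<^sup>2 / 16))"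
proof -
  define \<theta> where "\<theta> = d / 4"
  have t: "0 < \<theta>" "\<theta> \<le> 1/2" using d by (auto simp: \<theta>_def)
  have l1: "- \<theta> - 2 * \<theta>\<^sup>2 \<le> ln (1 - \<theta>)" by (rule ln_one_minus_pos_lower_bound) (use t in auto)
  have l2: "\<theta> - \<theta>\<^sup>2 \<le> ln (1 + \<theta>)" by (rule ln_one_plus_pos_lower_bound) (use t in auto)
  have s1: "sqrt (1 / (1 - \<theta>)) = exp (- ln (1 - \<theta>) / 2)"
    using t by (simp add: sqrt_exp_ln ln_div)
  have s2: "sqrt (1 / (1 + \<theta>)) = exp (- ln (1 + \<theta>) / 2)"
    using t by (simp add: sqrt_exp_ln ln_div)
  have dd: "d\<^sup>2 / 16 = \<theta>\<^sup>2" "\<theta> * (1 + d) = \<theta> + 4 * \<theta>\<^sup>2" "\<theta> * (1 - d) = \<theta> - 4 * \<theta>\<^sup>2"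
    by (simp_all add: \<theta>_def power2_eq_square field_simps)
  have "exp (- \<theta> * (1 + d) / 2) * sqrt (1 / (1 - \<theta>)) = exp (- \<theta> * (1 + d) / 2 + - ln (1 - \<theta>) / 2)"
    by (simp only: s1 exp_add)
  also have "\<dots> \<le> exp (- (d\<^sup>2 / 16))"
  proof -
    have A: "- \<theta> * (1 + d) = -(\<theta> + 4 * \<theta>\<^sup>2)" using dd(2) by simp
    show ?thesis unfolding exp_le_cancel_iff A using l1 dd(1) by (simp add: field_simps)
  qed
  finally show "exp (- (d/4) * (1 + d) / 2) * sqrt (1 / (1 - d/4)) \<le> exp (- (d\<^sup>2 / 16))"
    by (simp only: \<theta>_def)
  have "exp (\<theta> * (1 - d) / 2) * sqrt (1 / (1 + \<theta>)) = exp (\<theta> * (1 - d) / 2 + - ln (1 + \<theta>) / 2)"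
    by (simp only: s2 exp_add)
  also have "\<dots> \<le> exp (- (d\<^sup>2 / 16))"
  proof -
    have A: "\<theta> * (1 - d) = \<theta> - 4 * \<theta>\<^sup>2" using dd(3) by simp
    show ?thesis unfolding exp_le_cancel_iff A using l2 dd(1) by (simp add: field_simps) (smt (verit) zero_le_power2)
  qed
  finally show "exp ((d/4) * (1 - d) / 2) * sqrt (1 / (1 + d/4)) \<le> exp (- (d\<^sup>2 / 16))"
    by (simp only: \<theta>_def)
qed

lemma shell_lower:
  assumes s: "0 < s" and r: "0 < r" "r < s"
  shows "\<forall>\<^sub>F n in sequentially. ennreal (sqrt (2 * pi * s) ^ n / 2) \<le>
     (\<integral>\<^sup>+x. ennreal (indicator {s - r .. s + r} (sqnorm n x / real n) * exp (- (1/(2 * s)) * sqnorm n x)) \<partial>Rn n)"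
proof -
  define a where "a = 1 / (2 * s)"
  define d where "d = r / s"
  define \<theta> where "\<theta> = d / 4"
  define lam where "lam = \<theta> * a"
  define S where "S = sqrt (2 * pi * s)"
  define q1 where "q1 = exp (- (d/4) * (1 + d) / 2) * sqrt (1 / (1 - d/4))"
  define q2 where "q2 = exp ((d/4) * (1 - d) / 2) * sqrt (1 / (1 + d/4))"
  define \<rho> where "\<rho> = exp (- (d\<^sup>2 / 16))"
  have apos: "0 < a" using s by (simp add: a_def)
  have d01: "0 < d" "d < 1" using s r by (auto simp: d_def)
  have t: "0 < \<theta>" "\<theta> < 1" using d01 by (auto simp: \<theta>_def)
  have lpos: "0 < lam" "lam < a" using t apos by (auto simp: lam_def)
  have Spos: "0 < S" using s by (simp add: S_def)
  have "0 < 1 - d/4" "0 < 1 + d/4" using d01 by auto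
  hence q1: "0 \<le> q1" "q1 \<le> \<rho>" using q_bounds(1)[OF d01] by (auto simp: q1_def \<rho>_def)
  have q2: "0 \<le> q2" "q2 \<le> \<rho>" using q_bounds(2)[OF d01] \<open>0 < 1 + d/4\<close> by (auto simp: q2_def \<rho>_def)
  have rho: "0 < \<rho>" "\<rho> < 1" using d01 by (auto simp: \<rho>_def)
  have as: "a * s = 1/2" using s by (simp add: a_def)
  have id1: "exp (- lam * (s + r)) * sqrt (pi / (a - lam)) = S * q1"
  proof -
    have e: "- lam * (s + r) = - (d/4) * (1 + d) / 2"
      unfolding lam_def \<theta>_def d_def a_def using s by (simp add: field_simps)
    have "sqrt (pi / (a - lam)) = sqrt (pi / a) * sqrt (1 / (1 - d/4))"
      unfolding lam_def \<theta>_def using apos t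
      by (simp add: real_sqrt_mult[symmetric] field_simps \<theta>_def)
    moreover have "sqrt (pi / a) = S" unfolding S_def a_def using s by (simp add: field_simps)
    ultimately show ?thesis unfolding q1_def e by (simp add: ac_simps)
  qed
  have id2: "exp (lam * (s - r)) * sqrt (pi / (a + lam)) = S * q2"
  proof -
    have e: "lam * (s - r) = (d/4) * (1 - d) / 2"
      unfolding lam_def \<theta>_def d_def a_def using s by (simp add: field_simps)
    have "sqrt (pi / (a + lam)) = sqrt (pi / a) * sqrt (1 / (1 + d/4))"
      unfolding lam_def \<theta>_def using apos t
      by (simp add: real_sqrt_mult[symmetric] field_simps \<theta>_def)
    moreover have "sqrt (pi / a) = S" unfolding S_def a_def using s by (simp add: field_simps)
    ultimately show ?thesis unfolding q2_def e by (simp add: ac_simps)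
  qed
  have "(\<lambda>n. \<rho> ^ n) \<longlonglongrightarrow> 0" using rho by (intro LIMSEQ_power_zero) simp
  hence ev1: "\<forall>\<^sub>F n in sequentially. \<rho> ^ n < 1/4"
    by (rule order_tendstoD) simp
  have ev2: "\<forall>\<^sub>F n in sequentially. 1 \<le> n" by (rule eventually_ge_at_top)
  show ?thesis
    using ev1 ev2
  proof eventually_elim
    case (elim n)
    define I where "I = (\<integral>\<^sup>+x. ennreal (indicator {s - r .. s + r} (sqnorm n x / real n) * exp (- (1/(2 * s)) * sqnorm n x)) \<partial>Rn n)"
    have npos: "0 < real n" using elim by simp
    have pw: "exp (- a * sqnorm n x) \<le> indicator {s - r .. s + r} (sqnorm n x / real n) * exp (- (1/(2 * s)) * sqnorm n x)
        + exp (- lam * real n * (s + r)) * exp (- (a - lam) * sqnorm n x)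
        + exp (lam * real n * (s - r)) * exp (- (a + lam) * sqnorm n x)" for x
    proof -
      define u where "u = sqnorm n x"
      have "exp (- a * u) \<le> indicator {s - r .. s + r} (u / real n) * exp (- a * u)
        + exp (- lam * real n * (s + r)) * exp (- (a - lam) * u)
        + exp (lam * real n * (s - r)) * exp (- (a + lam) * u)"
      proof (cases "u / real n \<in> {s - r .. s + r}")
        case True thus ?thesis by simp
      next
        case False
        hence "u / real n < s - r \<or> s + r < u / real n" by auto
        thus ?thesis
        proof
          assume "u / real n < s - r"
          hence "u < real n * (s - r)" using npos by (simp add: field_simps)
          hence "lam * u \<le> lam * (real n * (s - r))" using lpos by (intro mult_left_mono) auto
          hence "- a * u \<le> lam * real n * (s - r) + - (a + lam) * u"
            by (simp add: algebra_simps)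
          hence "exp (- a * u) \<le> exp (lam * real n * (s - r)) * exp (- (a + lam) * u)"
            by (simp add: exp_add[symmetric])
          thus ?thesis by (simp add: add_increasing)
        next
          assume "s + r < u / real n"
          hence "real n * (s + r) < u" using npos by (simp add: field_simps)
          hence "lam * (real n * (s + r)) \<le> lam * u" using lpos by (intro mult_left_mono) auto
          hence "- a * u \<le> - lam * real n * (s + r) + - (a - lam) * u"
            by (simp add: algebra_simps)
          hence "exp (- a * u) \<le> exp (- lam * real n * (s + r)) * exp (- (a - lam) * u)"
            by (simp add: exp_add[symmetric])
          thus ?thesis by (simp add: add_increasing add_increasing2)
        qed
      qed
      thus ?thesis unfolding u_def a_def by simp
    qed
    have "ennreal (S ^ n) = (\<integral>\<^sup>+x. ennreal (exp (- a * sqnorm n x)) \<partial>Rn n)"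
      using gauss_nnRn[OF apos, of n] unfolding S_def a_def using s by (simp add: field_simps)
    also have "\<dots> \<le> (\<integral>\<^sup>+x. ennreal (indicator {s - r .. s + r} (sqnorm n x / real n) * exp (- (1/(2 * s)) * sqnorm n x))
        + ennreal (exp (- lam * real n * (s + r)) * exp (- (a - lam) * sqnorm n x))
        + ennreal (exp (lam * real n * (s - r)) * exp (- (a + lam) * sqnorm n x)) \<partial>Rn n)"
    proof (intro nn_integral_mono)
      fix x
      have "ennreal (exp (- a * sqnorm n x)) \<le> ennreal (indicator {s - r .. s + r} (sqnorm n x / real n) * exp (- (1/(2 * s)) * sqnorm n x)
        + exp (- lam * real n * (s + r)) * exp (- (a - lam) * sqnorm n x)
        + exp (lam * real n * (s - r)) * exp (- (a + lam) * sqnorm n x))"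
        by (rule ennreal_leI[OF pw])
      also have "\<dots> = ennreal (indicator {s - r .. s + r} (sqnorm n x / real n) * exp (- (1/(2 * s)) * sqnorm n x))
        + ennreal (exp (- lam * real n * (s + r)) * exp (- (a - lam) * sqnorm n x))
        + ennreal (exp (lam * real n * (s - r)) * exp (- (a + lam) * sqnorm n x))"
        by (simp add: ennreal_plus)
      finally show "ennreal (exp (- a * sqnorm n x)) \<le> ennreal (indicator {s - r .. s + r} (sqnorm n x / real n) * exp (- (1/(2 * s)) * sqnorm n x))
        + ennreal (exp (- lam * real n * (s + r)) * exp (- (a - lam) * sqnorm n x))
        + ennreal (exp (lam * real n * (s - r)) * exp (- (a + lam) * sqnorm n x))" .
    qed
    also have "\<dots> = I + (\<integral>\<^sup>+x. ennreal (exp (- lam * real n * (s + r)) * exp (- (a - lam) * sqnorm n x)) \<partial>Rn n)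
        + (\<integral>\<^sup>+x. ennreal (exp (lam * real n * (s - r)) * exp (- (a + lam) * sqnorm n x)) \<partial>Rn n)"
      unfolding I_def by (subst nn_integral_add; (subst nn_integral_add)?) (auto intro!: measurable_sqnorm)
    also have "\<dots> = I + ennreal (exp (- lam * real n * (s + r)) * sqrt (pi / (a - lam)) ^ n)
        + ennreal (exp (lam * real n * (s - r)) * sqrt (pi / (a + lam)) ^ n)"
    proof -
      have g1: "(\<integral>\<^sup>+x. ennreal (exp (- lam * real n * (s + r)) * exp (- (a - lam) * sqnorm n x)) \<partial>Rn n)
          = ennreal (exp (- lam * real n * (s + r)) * sqrt (pi / (a - lam)) ^ n)"
        by (rule gauss_nnRn_c) (use lpos in auto)
      have g2: "(\<integral>\<^sup>+x. ennreal (exp (lam * real n * (s - r)) * exp (- (a + lam) * sqnorm n x)) \<partial>Rn n)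
          = ennreal (exp (lam * real n * (s - r)) * sqrt (pi / (a + lam)) ^ n)"
        by (rule gauss_nnRn_c) (use lpos in auto)
      show ?thesis by (simp only: g1 g2)
    qed
    also have "exp (- lam * real n * (s + r)) * sqrt (pi / (a - lam)) ^ n = (S * q1) ^ n"
    proof -
      have "exp (- lam * real n * (s + r)) = exp (- lam * (s + r)) ^ n"
        by (subst exp_of_nat_mult[symmetric]) (simp add: algebra_simps)
      thus ?thesis by (simp only: power_mult_distrib[symmetric] id1)
    qed
    also have "exp (lam * real n * (s - r)) * sqrt (pi / (a + lam)) ^ n = (S * q2) ^ n"
    proof -
      have "exp (lam * real n * (s - r)) = exp (lam * (s - r)) ^ n"
        by (subst exp_of_nat_mult[symmetric]) (simp add: algebra_simps)
      thus ?thesis by (simp only: power_mult_distrib[symmetric] id2)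
    qed
    finally have A: "ennreal (S ^ n) \<le> I + ennreal ((S * q1) ^ n) + ennreal ((S * q2) ^ n)" .
    have p1: "q1 ^ n \<le> \<rho> ^ n" "q2 ^ n \<le> \<rho> ^ n" using q1 q2 by (auto intro: power_mono)
    have Sn: "0 < S ^ n" using Spos by simp
    have "(S * q1) ^ n + (S * q2) ^ n = S ^ n * (q1 ^ n + q2 ^ n)" by (simp add: power_mult_distrib algebra_simps)
    also have "\<dots> \<le> S ^ n * (1/2)"
      using p1 elim(1) Sn by (intro mult_left_mono) auto
    finally have le: "(S * q1) ^ n + (S * q2) ^ n \<le> S ^ n / 2" by simp
    have nn: "0 \<le> (S * q1) ^ n" "0 \<le> (S * q2) ^ n" using q1 q2 Spos by auto
    have C: "ennreal ((S * q1) ^ n) + ennreal ((S * q2) ^ n) \<le> ennreal (S ^ n / 2)"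
    proof -
      have "ennreal ((S * q1) ^ n) + ennreal ((S * q2) ^ n) = ennreal ((S * q1) ^ n + (S * q2) ^ n)"
        by (rule ennreal_plus[symmetric]) (use nn in auto)
      thus ?thesis using ennreal_leI[OF le] by simp
    qed
    have B: "ennreal (S ^ n) = ennreal (S ^ n / 2) + ennreal (S ^ n / 2)"
      using Sn by (subst ennreal_plus[symmetric]) auto
    have "ennreal (S ^ n / 2) + ennreal (S ^ n / 2) \<le> I + ennreal (S ^ n / 2)"
      using A C unfolding B by (metis add.assoc add_left_mono order_trans)
    hence "ennreal (S ^ n / 2) + ennreal (S ^ n / 2) \<le> ennreal (S ^ n / 2) + I" by (simp add: add.commute)
    hence "ennreal (S ^ n / 2) \<le> I" by (simp add: ennreal_add_left_cancel_le)
    thus ?case unfolding I_def S_def .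
  qed
qed

lemma poly_exp_small:
  fixes C \<eta> :: real assumes "0 < \<eta>"
  shows "(\<lambda>n. C * (real n + 1) ^ k / exp (real n * \<eta>)) \<longlonglongrightarrow> 0"
  using assms by real_asymp

definition ubE :: "(nat \<Rightarrow> real) \<Rightarrow> real \<Rightarrow> bool" where
  "ubE f c \<longleftrightarrow> (\<forall>\<eta>>0. \<forall>\<^sub>F n in sequentially. f n \<le> exp (real n * (c + \<eta>)))"

definition lbE :: "(nat \<Rightarrow> real) \<Rightarrow> real \<Rightarrow> bool" where
  "lbE f c \<longleftrightarrow> (\<forall>\<eta>>0. \<forall>\<^sub>F n in sequentially. exp (real n * (c - \<eta>)) \<le> f n)"

lemma ev_poly_le_exp:
  fixes C \<eta> :: real assumes "0 < \<eta>"
  shows "\<forall>\<^sub>F n in sequentially. C * (real n + 1) ^ k \<le> exp (real n * \<eta>)"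
proof -
  have "\<forall>\<^sub>F n in sequentially. C * (real n + 1) ^ k / exp (real n * \<eta>) < 1"
    by (rule order_tendstoD(2)[OF poly_exp_small[OF assms]]) simp
  thus ?thesis by eventually_elim (simp add: divide_less_eq)
qed

lemma ubE_eps: "(\<And>\<epsilon>. 0 < \<epsilon> \<Longrightarrow> ubE f (c + \<epsilon>)) \<Longrightarrow> ubE f c"
  unfolding ubE_def
proof (intro allI impI)
  fix \<eta> :: real assume "\<And>\<epsilon>. 0 < \<epsilon> \<Longrightarrow> \<forall>\<eta>>0. \<forall>\<^sub>F n in sequentially. f n \<le> exp (real n * (c + \<epsilon> + \<eta>))"
    and "0 < \<eta>"
  hence A: "\<forall>\<eta>'>0. \<forall>\<^sub>F n in sequentially. f n \<le> exp (real n * (c + \<eta>/2 + \<eta>'))" by simp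
  have "\<forall>\<^sub>F n in sequentially. f n \<le> exp (real n * (c + \<eta>/2 + \<eta>/2))"
    by (rule A[rule_format]) (use \<open>0 < \<eta>\<close> in simp)
  moreover have "c + \<eta>/2 + \<eta>/2 = c + \<eta>" by simp
  ultimately show "\<forall>\<^sub>F n in sequentially. f n \<le> exp (real n * (c + \<eta>))" by metis
qed

lemma lbE_eps: "(\<And>\<epsilon>. 0 < \<epsilon> \<Longrightarrow> lbE f (c - \<epsilon>)) \<Longrightarrow> lbE f c"
  unfolding lbE_def
proof (intro allI impI)
  fix \<eta> :: real assume "\<And>\<epsilon>. 0 < \<epsilon> \<Longrightarrow> \<forall>\<eta>>0. \<forall>\<^sub>F n in sequentially. exp (real n * (c - \<epsilon> - \<eta>)) \<le> f n"
    and "0 < \<eta>"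
  hence A: "\<forall>\<eta>'>0. \<forall>\<^sub>F n in sequentially. exp (real n * (c - \<eta>/2 - \<eta>')) \<le> f n" by simp
  have "\<forall>\<^sub>F n in sequentially. exp (real n * (c - \<eta>/2 - \<eta>/2)) \<le> f n"
    by (rule A[rule_format]) (use \<open>0 < \<eta>\<close> in simp)
  moreover have "c - \<eta>/2 - \<eta>/2 = c - \<eta>" by simp
  ultimately show "\<forall>\<^sub>F n in sequentially. exp (real n * (c - \<eta>)) \<le> f n" by metis
qed

lemma ubE_mono:
  assumes "\<forall>\<^sub>F n in sequentially. f n \<le> g n" "ubE g c" "c \<le> c'"
  shows "ubE f c'"
  unfolding ubE_def
proof (intro allI impI)
  fix \<eta> :: real assume "0 < \<eta>"
  with assms(2) have "\<forall>\<^sub>F n in sequentially. g n \<le> exp (real n * (c + \<eta>))" by (auto simp: ubE_def)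
  with assms(1) show "\<forall>\<^sub>F n in sequentially. f n \<le> exp (real n * (c' + \<eta>))"
  proof eventually_elim
    case (elim n)
    have "exp (real n * (c + \<eta>)) \<le> exp (real n * (c' + \<eta>))" using assms(3)
      by (simp add: mult_left_mono)
    thus ?case using elim by linarith
  qed
qed

lemma lbE_mono:
  assumes "\<forall>\<^sub>F n in sequentially. g n \<le> f n" "lbE g c" "c' \<le> c"
  shows "lbE f c'"
  unfolding lbE_def
proof (intro allI impI)
  fix \<eta> :: real assume "0 < \<eta>"
  with assms(2) have "\<forall>\<^sub>F n in sequentially. exp (real n * (c - \<eta>)) \<le> g n" by (auto simp: lbE_def)
  with assms(1) show "\<forall>\<^sub>F n in sequentially. exp (real n * (c' - \<eta>)) \<le> f n"
  proof eventually_elim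
    case (elim n)
    have "exp (real n * (c' - \<eta>)) \<le> exp (real n * (c - \<eta>))" using assms(3)
      by (simp add: mult_left_mono)
    thus ?case using elim by linarith
  qed
qed

lemma ubE_poly_exp:
  assumes q: "0 < q"
  shows "ubE (\<lambda>n. C * (real n + 1) ^ k * exp (\<kappa> * real n) * q ^ n) (\<kappa> + ln q)"
  unfolding ubE_def
proof (intro allI impI)
  fix \<eta> :: real assume e: "0 < \<eta>"
  show "\<forall>\<^sub>F n in sequentially. C * (real n + 1) ^ k * exp (\<kappa> * real n) * q ^ n \<le> exp (real n * (\<kappa> + ln q + \<eta>))"
    using ev_poly_le_exp[OF e, of C k]
  proof eventually_elim
    case (elim n)
    have qn: "q ^ n = exp (real n * ln q)" using q by (simp add: exp_of_nat_mult)
    have "C * (real n + 1) ^ k * exp (\<kappa> * real n) * q ^ n = (C * (real n + 1) ^ k) * exp (real n * (\<kappa> + ln q))"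
      by (simp add: qn exp_add[symmetric] algebra_simps)
    also have "\<dots> \<le> exp (real n * \<eta>) * exp (real n * (\<kappa> + ln q))"
      using elim by (intro mult_right_mono) auto
    also have "\<dots> = exp (real n * (\<kappa> + ln q + \<eta>))" by (simp add: exp_add[symmetric] algebra_simps)
    finally show ?case .
  qed
qed

lemma lbE_const_exp:
  assumes c: "0 < C"
  shows "lbE (\<lambda>n. C * exp (real n * B)) B"
  unfolding lbE_def
proof (intro allI impI)
  fix \<eta> :: real assume e: "0 < \<eta>"
  have "\<forall>\<^sub>F n in sequentially. (1 / C) * (real n + 1) ^ 0 \<le> exp (real n * \<eta>)" by (rule ev_poly_le_exp[OF e])
  thus "\<forall>\<^sub>F n in sequentially. exp (real n * (B - \<eta>)) \<le> C * exp (real n * B)"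
  proof eventually_elim
    case (elim n)
    hence "1 \<le> C * exp (real n * \<eta>)" using c by (simp add: field_simps)
    hence "exp (real n * (B - \<eta>)) \<le> C * exp (real n * \<eta>) * exp (real n * (B - \<eta>))" by simp
    also have "\<dots> = C * exp (real n * B)" by (simp add: exp_add[symmetric] algebra_simps)
    finally show ?case .
  qed
qed

lemma ubE_add:
  assumes "ubE f c" "ubE g c"
  shows "ubE (\<lambda>n. f n + g n) c"
  unfolding ubE_def
proof (intro allI impI)
  fix \<eta> :: real assume e: "0 < \<eta>"
  have e2: "0 < \<eta>/2" using e by simp
  have "\<forall>\<^sub>F n in sequentially. 2 * (real n + 1) ^ 0 \<le> exp (real n * (\<eta>/2))" by (rule ev_poly_le_exp[OF e2])
  moreover have "\<forall>\<^sub>F n in sequentially. f n \<le> exp (real n * (c + \<eta>/2))" using assms(1) e2 by (auto simp: ubE_def)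
  moreover have "\<forall>\<^sub>F n in sequentially. g n \<le> exp (real n * (c + \<eta>/2))" using assms(2) e2 by (auto simp: ubE_def)
  ultimately show "\<forall>\<^sub>F n in sequentially. f n + g n \<le> exp (real n * (c + \<eta>))"
  proof eventually_elim
    case (elim n)
    have "f n + g n \<le> 2 * exp (real n * (c + \<eta>/2))" using elim by linarith
    also have "\<dots> \<le> exp (real n * (\<eta>/2)) * exp (real n * (c + \<eta>/2))" using elim(1) by (intro mult_right_mono) auto
    also have "\<dots> = exp (real n * (c + \<eta>))" by (simp add: exp_add[symmetric] algebra_simps)
    finally show ?case .
  qed
qed

lemma ubE_div:
  assumes "ubE f a" "lbE g b"
  shows "ubE (\<lambda>n. f n / g n) (a - b)"
  unfolding ubE_def
proof (intro allI impI)
  fix \<eta> :: real assume e: "0 < \<eta>"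
  have e2: "0 < \<eta>/2" using e by simp
  have "\<forall>\<^sub>F n in sequentially. f n \<le> exp (real n * (a + \<eta>/2))" using assms(1) e2 by (auto simp: ubE_def)
  moreover have "\<forall>\<^sub>F n in sequentially. exp (real n * (b - \<eta>/2)) \<le> g n" using assms(2) e2 by (auto simp: lbE_def)
  ultimately show "\<forall>\<^sub>F n in sequentially. f n / g n \<le> exp (real n * (a - b + \<eta>))"
  proof eventually_elim
    case (elim n)
    have gpos: "0 < g n" using elim(2) by (meson exp_gt_zero less_le_trans)
    have "f n / g n \<le> exp (real n * (a + \<eta>/2)) / g n" using elim(1) gpos by (simp add: divide_right_mono)
    also have "\<dots> \<le> exp (real n * (a + \<eta>/2)) / exp (real n * (b - \<eta>/2))"
      using elim(2) gpos by (intro divide_left_mono) auto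
    also have "\<dots> = exp (real n * (a - b + \<eta>))" by (simp add: exp_diff[symmetric] algebra_simps)
    finally show ?case .
  qed
qed

locale lag =
  fixes m :: nat and \<alpha> :: real
  assumes m1: "1 \<le> m" and apos: "0 < \<alpha>"
begin

definition c0 :: real where "c0 = 2 / (\<alpha>^2 * real m)"
definition G :: "nat \<Rightarrow> (nat \<Rightarrow> real) \<Rightarrow> real" where
  "G n x = (Lg m \<alpha> n (sqnorm n x))\<^sup>2 * exp (- c0 * sqnorm n x)"
definition NI :: "nat \<Rightarrow> real set \<Rightarrow> ennreal" where
  "NI n B = (\<integral>\<^sup>+x. ennreal (indicator B (sqnorm n x / real n) * G n x) \<partial>Rn n)"
definition N :: "nat \<Rightarrow> real set \<Rightarrow> real" where
  "N n B = enn2real (NI n B)"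
definition phi :: "real \<Rightarrow> real" where
  "phi s = ln (2 * pi * s) / 2 - c0 * s + 1/2"

lemma c0pos: "0 < c0" unfolding c0_def using m1 apos by simp

lemma G_nonneg: "0 \<le> G n x" unfolding G_def by simp

lemma G_meas[measurable]: "G n \<in> borel_measurable (Rn n)"
proof -
  have "G n = (\<lambda>x. (\<Sum>k\<le>m-1. cfL m \<alpha> n k * sqnorm n x ^ k)\<^sup>2 * exp (- c0 * sqnorm n x))"
    unfolding G_def by (simp add: Lg_poly[OF m1 apos])
  also have "\<dots> \<in> borel_measurable (Rn n)" by measurable
  finally show ?thesis .
qed

lemma UG:
  assumes e: "0 < \<epsilon>" and C: "\<forall>n u. 0 \<le> u \<longrightarrow> (Lg m \<alpha> n u)\<^sup>2 \<le> C * (real n + 1) ^ (2 * (m - 1)) * exp (\<epsilon> * u)"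
    and b: "0 < c0 - \<epsilon> - \<mu>"
    and cond: "\<And>x. indicator B (sqnorm n x / real n) \<le> exp (\<mu> * sqnorm n x + \<kappa> * real n)"
  shows "NI n B \<le> ennreal (C * (real n + 1) ^ (2 * (m - 1)) * exp (\<kappa> * real n) * sqrt (pi / (c0 - \<epsilon> - \<mu>)) ^ n)"
proof -
  have Cnn: "0 \<le> C" using C[rule_format, of 0 0] by simp (smt (verit) zero_le_power2 mult_nonneg_nonneg)
  define K where "K = C * (real n + 1) ^ (2 * (m - 1)) * exp (\<kappa> * real n)"
  have Knn: "0 \<le> K" unfolding K_def using Cnn by simp
  have pw: "indicator B (sqnorm n x / real n) * G n x \<le> K * exp (- (c0 - \<epsilon> - \<mu>) * sqnorm n x)" for x
  proof -
    define u where "u = sqnorm n x"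
    have u: "0 \<le> u" unfolding u_def by (rule sqnorm_nonneg)
    have "indicator B (u / real n) * G n x \<le> exp (\<mu> * u + \<kappa> * real n) * ((C * (real n + 1) ^ (2 * (m - 1)) * exp (\<epsilon> * u)) * exp (- c0 * u))"
      unfolding G_def u_def[symmetric]
      using cond[of x] C[rule_format, OF u, of n] Cnn unfolding u_def[symmetric]
      by (intro mult_mono) (auto simp: indicator_def zero_le_mult_iff)
    also have "\<dots> = K * exp (- (c0 - \<epsilon> - \<mu>) * u)"
      unfolding K_def by (simp add: exp_add[symmetric] algebra_simps)
    finally show ?thesis unfolding u_def .
  qed
  have "NI n B \<le> (\<integral>\<^sup>+x. ennreal (K * exp (- (c0 - \<epsilon> - \<mu>) * sqnorm n x)) \<partial>Rn n)"
    unfolding NI_def by (intro nn_integral_mono ennreal_leI pw)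
  also have "\<dots> = ennreal (K * sqrt (pi / (c0 - \<epsilon> - \<mu>)) ^ n)"
    by (rule gauss_nnRn_c[OF b Knn])
  finally show ?thesis unfolding K_def .
qed

lemma UT:
  assumes \<beta>: "0 < \<beta>"
    and cond: "\<And>n x. 1 \<le> n \<Longrightarrow> indicator B (sqnorm n x / real n) \<le> exp ((c0 - \<beta>) * sqnorm n x + \<kappa> * real n)"
  shows "ubE (\<lambda>n. N n B) (\<kappa> + ln (pi / \<beta>) / 2)"
proof (rule ubE_eps)
  fix \<epsilon>' :: real assume e': "0 < \<epsilon>'"
  define \<epsilon> where "\<epsilon> = \<beta> * (1 - exp (- 2 * \<epsilon>'))"
  have ex: "exp (- 2 * \<epsilon>') < 1" using e' by simp
  have epos: "0 < \<epsilon>" unfolding \<epsilon>_def using \<beta> ex by simp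
  have bm: "\<beta> - \<epsilon> = \<beta> * exp (- 2 * \<epsilon>')" unfolding \<epsilon>_def by (simp add: algebra_simps)
  have bmpos: "0 < \<beta> - \<epsilon>" unfolding bm using \<beta> by simp
  obtain C where C0: "C \<ge> 0" and C: "\<forall>n u. 0 \<le> u \<longrightarrow> (Lg m \<alpha> n u)\<^sup>2 \<le> C * (real n + 1) ^ (2 * (m - 1)) * exp (\<epsilon> * u)"
    using Lg_upper[OF m1 apos epos] by blast
  have q: "0 < sqrt (pi / (\<beta> - \<epsilon>))" using bmpos by simp
  have lnq: "ln (sqrt (pi / (\<beta> - \<epsilon>))) = ln (pi / \<beta>) / 2 + \<epsilon>'"
    using \<beta> bmpos unfolding bm
    by (simp add: ln_sqrt ln_div ln_mult)
  have "\<forall>\<^sub>F n in sequentially. N n B \<le> C * (real n + 1) ^ (2 * (m - 1)) * exp (\<kappa> * real n) * sqrt (pi / (\<beta> - \<epsilon>)) ^ n"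
    using eventually_ge_at_top[of 1]
  proof eventually_elim
    case (elim n)
    have "NI n B \<le> ennreal (C * (real n + 1) ^ (2 * (m - 1)) * exp (\<kappa> * real n) * sqrt (pi / (c0 - \<epsilon> - (c0 - \<beta>))) ^ n)"
      by (rule UG[OF epos C]) (use bmpos cond elim in auto)
    thus ?case unfolding N_def using C0 bmpos by (intro enn2real_leI) (auto simp: zero_le_mult_iff)
  qed
  moreover have "ubE (\<lambda>n. C * (real n + 1) ^ (2 * (m - 1)) * exp (\<kappa> * real n) * sqrt (pi / (\<beta> - \<epsilon>)) ^ n)
      (\<kappa> + ln (sqrt (pi / (\<beta> - \<epsilon>))))"
    by (rule ubE_poly_exp[OF q])
  ultimately show "ubE (\<lambda>n. N n B) (\<kappa> + ln (pi / \<beta>) / 2 + \<epsilon>')"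
    by (rule ubE_mono) (simp add: lnq)
qed

lemma UZ: "ubE (\<lambda>n. N n UNIV) (ln (pi / c0) / 2)"
  using UT[of c0 UNIV 0] c0pos by simp

lemma Uhi:
  assumes b: "0 < b" "1 < 2 * c0 * b"
  shows "ubE (\<lambda>n. N n {b..}) (phi b)"
proof -
  define lam where "lam = c0 - 1 / (2 * b)"
  have lam: "0 < lam" unfolding lam_def using b by (simp add: field_simps)
  have "ubE (\<lambda>n. N n {b..}) (- lam * b + ln (pi / (1 / (2 * b))) / 2)"
  proof (rule UT)
    show "0 < 1 / (2 * b)" using b by simp
    fix n :: nat and x assume n: "1 \<le> n"
    show "indicator {b..} (sqnorm n x / real n) \<le> exp ((c0 - 1 / (2 * b)) * sqnorm n x + - lam * b * real n)"
    proof (cases "b \<le> sqnorm n x / real n")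
      case True
      hence "real n * b \<le> sqnorm n x" using n by (simp add: field_simps)
      hence "lam * (real n * b) \<le> lam * sqnorm n x" using lam by (intro mult_left_mono) auto
      hence "0 \<le> (c0 - 1 / (2 * b)) * sqnorm n x + - lam * b * real n"
        unfolding lam_def[symmetric] by (simp add: algebra_simps)
      thus ?thesis by (simp add: indicator_def)
    qed (simp add: indicator_def)
  qed
  moreover have "- lam * b + ln (pi / (1 / (2 * b))) / 2 = phi b"
    unfolding lam_def phi_def using b by (simp add: field_simps)
  ultimately show ?thesis by simp
qed

lemma Ulo:
  assumes b: "0 < b" "2 * c0 * b < 1"
  shows "ubE (\<lambda>n. N n {..b}) (phi b)"
proof -
  define lam where "lam = 1 / (2 * b) - c0"
  have lam: "0 < lam" unfolding lam_def using b by (simp add: field_simps)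
  have "ubE (\<lambda>n. N n {..b}) (lam * b + ln (pi / (1 / (2 * b))) / 2)"
  proof (rule UT)
    show "0 < 1 / (2 * b)" using b by simp
    fix n :: nat and x assume n: "1 \<le> n"
    show "indicator {..b} (sqnorm n x / real n) \<le> exp ((c0 - 1 / (2 * b)) * sqnorm n x + lam * b * real n)"
    proof (cases "sqnorm n x / real n \<le> b")
      case True
      hence "sqnorm n x \<le> real n * b" using n by (simp add: field_simps)
      hence "lam * sqnorm n x \<le> lam * (real n * b)" using lam by (intro mult_left_mono) auto
      hence "0 \<le> - lam * sqnorm n x + lam * b * real n" by (simp add: algebra_simps)
      moreover have "c0 - 1 / (2 * b) = - lam" unfolding lam_def by simp
      ultimately have "0 \<le> (c0 - 1 / (2 * b)) * sqnorm n x + lam * b * real n"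
        by (simp only:)
      thus ?thesis by (simp add: indicator_def)
    qed (simp add: indicator_def)
  qed
  moreover have "lam * b + ln (pi / (1 / (2 * b))) / 2 = phi b"
    unfolding lam_def phi_def using b by (simp add: field_simps)
  ultimately show ?thesis by simp
qed

end

context lag
begin

lemma NI_finite: assumes "1 \<le> n" shows "NI n B < \<infinity>"
proof -
  have e: "0 < c0 / 2" using c0pos by simp
  obtain C where C: "\<forall>n u. 0 \<le> u \<longrightarrow> (Lg m \<alpha> n u)\<^sup>2 \<le> C * (real n + 1) ^ (2 * (m - 1)) * exp (c0 / 2 * u)"
    using Lg_upper[OF m1 apos e] by blast
  have "NI n B \<le> ennreal (C * (real n + 1) ^ (2 * (m - 1)) * exp (0 * real n) * sqrt (pi / (c0 - c0 / 2 - 0)) ^ n)"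
    by (rule UG[OF e C]) (use c0pos in \<open>auto simp: indicator_def\<close>)
  also have "\<dots> < \<infinity>" by simp
  finally show ?thesis .
qed

lemma NI_mono: assumes "B \<subseteq> B'" shows "NI n B \<le> NI n B'"
  unfolding NI_def using assms G_nonneg
  by (intro nn_integral_mono ennreal_leI mult_right_mono) (auto simp: indicator_def)

lemma N_mono: assumes "1 \<le> n" "B \<subseteq> B'" shows "N n B \<le> N n B'"
  unfolding N_def by (rule enn2real_mono[OF NI_mono[OF assms(2)]]) (use NI_finite[OF assms(1)] in simp)

lemma LB:
  assumes t: "0 < t1" "t1 < t2"
    and hB: "\<And>s. t1 \<le> s \<Longrightarrow> s \<le> t2 \<Longrightarrow> B \<le> phi s - (c0 + 1 / (2 * t1)) * (t2 - t1)"
  shows "lbE (\<lambda>n. N n {t1<..<t2}) B"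
proof -
  define h where "h = (t2 - t1) / (2 * real m)"
  define r where "r = h / 3"
  define s where "s j = t1 + (2 * real j + 1) * h" for j :: nat
  define a where "a j = 1 / (2 * s j)" for j
  define K where "K j = (c0 - a j) * s j + \<bar>c0 - a j\<bar> * r" for j
  have mpos: "0 < real m" using m1 by simp
  have hpos: "0 < h" unfolding h_def using t mpos by simp
  have rpos: "0 < r" unfolding r_def using hpos by simp
  have sj: "t1 + h \<le> s j" for j unfolding s_def using hpos by simp
  have spos: "0 < s j" for j using sj[of j] t hpos by linarith
  have rs: "r < s j" for j using sj[of j] t hpos unfolding r_def by linarith
  have shell: "t1 < s j - r" "s j + r < t2" if "j < m" for j
  proof -
    show "t1 < s j - r" using sj[of j] hpos unfolding r_def by linarith
    have "real j + 1 \<le> real m" using that by simp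
    hence A: "(2 * real j + 2) * h \<le> (2 * real m) * h" using hpos by (intro mult_right_mono) auto
    have B: "(2 * real j + 1) * h + h/3 < (2 * real j + 2) * h" using hpos by (simp add: algebra_simps)
    from A B have "(2 * real j + 1) * h + h/3 < 2 * real m * h" by linarith
    moreover have "2 * real m * h = t2 - t1" unfolding h_def using mpos by simp
    ultimately show "s j + r < t2" unfolding s_def r_def by linarith
  qed
  have sin: "t1 \<le> s j" "s j \<le> t2" if "j < m" for j using shell[OF that] rpos by auto
  obtain c where cpos: "0 < c" and Lc: "\<forall>n\<ge>1. \<exists>j<m. \<forall>v. \<bar>v - s j\<bar> \<le> h/3 \<longrightarrow> c \<le> (Lg m \<alpha> n (real n * v))\<^sup>2"
    using Lg_lower[OF m1 apos hpos, of t1] unfolding s_def by blast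
  have ev: "\<forall>\<^sub>F n in sequentially. \<forall>j\<in>{..<m}. ennreal (sqrt (2 * pi * s j) ^ n / 2) \<le>
     (\<integral>\<^sup>+x. ennreal (indicator {s j - r .. s j + r} (sqnorm n x / real n) * exp (- (1/(2 * s j)) * sqnorm n x)) \<partial>Rn n)"
  proof (rule eventually_ball_finite)
    show "finite {..<m}" by simp
    show "\<forall>j\<in>{..<m}. \<forall>\<^sub>F n in sequentially. ennreal (sqrt (2 * pi * s j) ^ n / 2) \<le>
     (\<integral>\<^sup>+x. ennreal (indicator {s j - r .. s j + r} (sqnorm n x / real n) * exp (- (1/(2 * s j)) * sqnorm n x)) \<partial>Rn n)"
      by (intro ballI shell_lower spos rpos rs)
  qed
  have Kb: "B \<le> ln (sqrt (2 * pi * s j)) - K j" if "j < m" for j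
  proof -
    have "\<bar>c0 - a j\<bar> \<le> c0 + 1 / (2 * t1)"
    proof -
      have "0 < a j" unfolding a_def using spos[of j] by simp
      moreover have "a j \<le> 1 / (2 * t1)" unfolding a_def using sin[OF that] t
        by (intro divide_left_mono) auto
      ultimately show ?thesis using c0pos by linarith
    qed
    moreover have "r \<le> t2 - t1" using shell[OF that] rpos by linarith
    ultimately have "\<bar>c0 - a j\<bar> * r \<le> (c0 + 1 / (2 * t1)) * (t2 - t1)"
      using rpos by (intro mult_mono) auto
    moreover have "ln (sqrt (2 * pi * s j)) - K j = phi (s j) - \<bar>c0 - a j\<bar> * r"
      unfolding K_def phi_def a_def using spos[of j] by (simp add: ln_sqrt field_simps)
    ultimately show ?thesis using hB[OF sin[OF that]] by linarith
  qed
  have main: "\<forall>\<^sub>F n in sequentially. c / 2 * exp (real n * B) \<le> N n {t1<..<t2}"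
    using ev eventually_ge_at_top[of 1]
  proof eventually_elim
    case (elim n)
    obtain j where j: "j < m" and jL: "\<forall>v. \<bar>v - s j\<bar> \<le> h/3 \<longrightarrow> c \<le> (Lg m \<alpha> n (real n * v))\<^sup>2"
      using Lc elim(2) by blast
    have npos: "0 < real n" using elim(2) by simp
    have pw: "ennreal (c * exp (- K j * real n)) * ennreal (indicator {s j - r .. s j + r} (sqnorm n x / real n) * exp (- (1/(2 * s j)) * sqnorm n x))
        \<le> ennreal (indicator {t1<..<t2} (sqnorm n x / real n) * G n x)" for x
    proof (cases "sqnorm n x / real n \<in> {s j - r .. s j + r}")
      case False thus ?thesis by simp
    next
      case True
      define u where "u = sqnorm n x"
      define v where "v = u / real n"
      have uv: "u = real n * v" unfolding v_def using npos by simp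
      have vr: "\<bar>v - s j\<bar> \<le> r" using True unfolding v_def u_def by auto
      have vin: "v \<in> {t1<..<t2}" using vr shell[OF j] by auto
      have cL: "c \<le> (Lg m \<alpha> n u)\<^sup>2" using jL vr unfolding uv r_def by auto
      have "(c0 - a j) * (u - real n * s j) \<le> \<bar>c0 - a j\<bar> * \<bar>u - real n * s j\<bar>"
        by (metis abs_ge_self abs_mult)
      also have "\<bar>u - real n * s j\<bar> = real n * \<bar>v - s j\<bar>"
      proof -
        have "u - real n * s j = real n * (v - s j)" unfolding uv by (simp add: algebra_simps)
        thus ?thesis using npos by (simp add: abs_mult)
      qed
      also have "\<bar>c0 - a j\<bar> * (real n * \<bar>v - s j\<bar>) \<le> \<bar>c0 - a j\<bar> * (real n * r)"
        using vr npos by (intro mult_left_mono) auto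
      finally have "(c0 - a j) * (u - real n * s j) \<le> \<bar>c0 - a j\<bar> * (real n * r)" .
      hence ex: "- K j * real n - a j * u \<le> - c0 * u" unfolding K_def by (simp add: algebra_simps)
      have "c * exp (- K j * real n) * exp (- (1/(2 * s j)) * u) = c * exp (- K j * real n - a j * u)"
        unfolding a_def by (simp add: exp_diff exp_minus field_simps)
      also have "\<dots> \<le> (Lg m \<alpha> n u)\<^sup>2 * exp (- c0 * u)"
        using cL ex cpos by (intro mult_mono) auto
      finally have "c * exp (- K j * real n) * exp (- (1/(2 * s j)) * u) \<le> G n x"
        unfolding G_def u_def .
      thus ?thesis using True vin cpos unfolding v_def u_def
        by (simp add: ennreal_mult[symmetric] indicator_def ennreal_leI)
    qed
    have "ennreal (c * exp (- K j * real n)) * ennreal (sqrt (2 * pi * s j) ^ n / 2)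
        \<le> ennreal (c * exp (- K j * real n)) * (\<integral>\<^sup>+x. ennreal (indicator {s j - r .. s j + r} (sqnorm n x / real n) * exp (- (1/(2 * s j)) * sqnorm n x)) \<partial>Rn n)"
      using elim(1) j by (intro mult_left_mono) auto
    also have "\<dots> = (\<integral>\<^sup>+x. ennreal (c * exp (- K j * real n)) * ennreal (indicator {s j - r .. s j + r} (sqnorm n x / real n) * exp (- (1/(2 * s j)) * sqnorm n x)) \<partial>Rn n)"
      by (rule nn_integral_cmult[symmetric]) measurable
    also have "\<dots> \<le> NI n {t1<..<t2}" unfolding NI_def by (intro nn_integral_mono pw)
    finally have A0: "ennreal (c * exp (- K j * real n)) * ennreal (sqrt (2 * pi * s j) ^ n / 2) \<le> NI n {t1<..<t2}" .
    have eqm: "ennreal (c * exp (- K j * real n)) * ennreal (sqrt (2 * pi * s j) ^ n / 2) = ennreal (c * exp (- K j * real n) * (sqrt (2 * pi * s j) ^ n / 2))"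
      by (rule ennreal_mult[symmetric]) (use cpos spos[of j] in auto)
    have A: "ennreal (c * exp (- K j * real n) * (sqrt (2 * pi * s j) ^ n / 2)) \<le> NI n {t1<..<t2}"
      using A0 unfolding eqm .
    have "c / 2 * exp (real n * B) \<le> c * exp (- K j * real n) * (sqrt (2 * pi * s j) ^ n / 2)"
    proof -
      have sq: "sqrt (2 * pi * s j) ^ n = exp (real n * ln (sqrt (2 * pi * s j)))"
        using spos[of j] by (simp add: exp_of_nat_mult)
      have "real n * B \<le> real n * (ln (sqrt (2 * pi * s j)) - K j)"
        using Kb[OF j] npos by (intro mult_left_mono) auto
      hence "exp (real n * B) \<le> exp (- K j * real n) * sqrt (2 * pi * s j) ^ n"
        unfolding sq by (simp add: exp_add[symmetric] algebra_simps)
      thus ?thesis using cpos by (simp add: field_simps)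
    qed
    hence "ennreal (c / 2 * exp (real n * B)) \<le> NI n {t1<..<t2}"
      using A by (meson ennreal_leI order_trans)
    hence "enn2real (ennreal (c / 2 * exp (real n * B))) \<le> N n {t1<..<t2}"
      unfolding N_def by (rule enn2real_mono) (use NI_finite[OF elim(2)] in simp)
    thus ?case using cpos by simp
  qed
  have "lbE (\<lambda>n. c / 2 * exp (real n * B)) B" by (rule lbE_const_exp) (use cpos in simp)
  thus ?thesis by (rule lbE_mono[OF main]) simp
qed

end

context lag
begin

lemma LBpt:
  assumes t: "0 < t" and d0: "0 < \<delta>0"
  shows "lbE (\<lambda>n. N n {t - \<delta>0<..<t + \<delta>0}) (phi t)"
proof (rule lbE_eps)
  fix \<eta> :: real assume e: "0 < \<eta>"
  have "isCont phi t" unfolding phi_def using t by (intro continuous_intros) auto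
  hence "phi \<midarrow>t\<rightarrow> phi t" by (simp add: isCont_def)
  then obtain \<delta>1 where d1: "0 < \<delta>1" and cont: "\<And>s. s \<noteq> t \<and> norm (s - t) < \<delta>1 \<Longrightarrow> norm (phi s - phi t) < \<eta>/2"
    unfolding LIM_eq using e by (meson half_gt_zero)
  define \<delta> where "\<delta> = min \<delta>0 (min (\<delta>1/2) (min (t/2) (\<eta> / (4 * (c0 + 1/t)))))"
  have cpos: "0 < c0 + 1/t" using c0pos t by (intro add_pos_pos) auto
  have dpos: "0 < \<delta>" unfolding \<delta>_def using d0 d1 t e cpos by auto
  have dle: "\<delta> \<le> \<delta>0" "\<delta> \<le> \<delta>1/2" "\<delta> \<le> t/2" "\<delta> \<le> \<eta> / (4 * (c0 + 1/t))" unfolding \<delta>_def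
    by (rule min.cobounded1, rule min.coboundedI2, rule min.cobounded1,
        rule min.coboundedI2, rule min.coboundedI2, rule min.cobounded1,
        rule min.coboundedI2, rule min.coboundedI2, rule min.cobounded2)
  define t1 where "t1 = t - \<delta>"
  define t2 where "t2 = t + \<delta>"
  have t1: "0 < t1" "t1 < t2" "t/2 \<le> t1" unfolding t1_def t2_def using dle dpos by auto
  have key: "(c0 + 1 / (2 * t1)) * (t2 - t1) \<le> \<eta>/2"
  proof -
    have "1 / (2 * t1) \<le> 1 / t" using t1 t by (simp add: field_simps)
    hence "(c0 + 1 / (2 * t1)) * (t2 - t1) \<le> (c0 + 1 / t) * (2 * \<delta>)"
      unfolding t1_def t2_def using dpos cpos by (intro mult_mono) auto
    also have "\<dots> \<le> (c0 + 1 / t) * (2 * (\<eta> / (4 * (c0 + 1/t))))"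
      using dle cpos by (intro mult_left_mono) auto
    also have "\<dots> = \<eta>/2" using cpos by (simp add: field_simps)
    finally show ?thesis .
  qed
  have lb: "lbE (\<lambda>n. N n {t1<..<t2}) (phi t - \<eta>)"
  proof (rule LB[OF t1(1,2)])
    fix s assume s: "t1 \<le> s" "s \<le> t2"
    have "phi t - \<eta>/2 \<le> phi s"
    proof (cases "s = t")
      case False
      have "norm (s - t) < \<delta>1" using s dle dpos d1 unfolding t1_def t2_def by auto
      hence "norm (phi s - phi t) < \<eta>/2" using cont False by blast
      hence "\<bar>phi s - phi t\<bar> < \<eta>/2" by (simp only: real_norm_def)
      thus ?thesis by linarith
    qed (use e in simp)
    thus "phi t - \<eta> \<le> phi s - (c0 + 1 / (2 * t1)) * (t2 - t1)" using key by linarith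
  qed
  have sub: "{t1<..<t2} \<subseteq> {t - \<delta>0<..<t + \<delta>0}" using dle unfolding t1_def t2_def by auto
  have ev: "\<forall>\<^sub>F n in sequentially. N n {t1<..<t2} \<le> N n {t - \<delta>0<..<t + \<delta>0}"
    using eventually_ge_at_top[of 1]
    by eventually_elim (rule N_mono[OF _ sub])
  show "lbE (\<lambda>n. N n {t - \<delta>0<..<t + \<delta>0}) (phi t - \<eta>)"
    by (rule lbE_mono[OF ev lb order_refl])
qed

lemma LZ: "lbE (\<lambda>n. N n UNIV) (ln (pi / c0) / 2)"
proof -
  have t: "0 < 1 / (2 * c0)" using c0pos by simp
  have lb: "lbE (\<lambda>n. N n {1 / (2 * c0) - 1<..<1 / (2 * c0) + 1}) (phi (1 / (2 * c0)))"
    by (rule LBpt[OF t]) simp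
  have eq: "phi (1 / (2 * c0)) = ln (pi / c0) / 2"
    unfolding phi_def using c0pos by (simp add: field_simps)
  have ev: "\<forall>\<^sub>F n in sequentially. N n {1 / (2 * c0) - 1<..<1 / (2 * c0) + 1} \<le> N n UNIV"
    using eventually_ge_at_top[of 1] by eventually_elim (rule N_mono, auto)
  show ?thesis using lbE_mono[OF ev lb order_refl] unfolding eq .
qed

end

lemma pval_pos:
  assumes "1 \<le> n" "0 < P"
  shows "ereal (1 / real n) * ln_ereal P = ereal (ln P / real n)"
  using assms by (simp add: ln_ereal_def)

lemma pval_nonpos:
  assumes "1 \<le> n" "P \<le> 0"
  shows "ereal (1 / real n) * ln_ereal P = - \<infinity>"
  using assms by (simp add: ln_ereal_def)

lemma lbE_liminf:
  assumes "lbE P c"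
  shows "ereal c \<le> liminf (\<lambda>n. ereal (1 / real n) * ln_ereal (P n))"
proof (rule ereal_le_epsilon2)
  fix e :: real assume e: "0 < e"
  have "\<forall>\<^sub>F n in sequentially. exp (real n * (c - e)) \<le> P n" using assms e by (auto simp: lbE_def)
  hence "\<forall>\<^sub>F n in sequentially. ereal (c - e) \<le> ereal (1 / real n) * ln_ereal (P n)"
    using eventually_ge_at_top[of 1]
  proof eventually_elim
    case (elim n)
    have Pp: "0 < P n" using elim(1) by (meson exp_gt_zero less_le_trans)
    have "real n * (c - e) \<le> ln (P n)" using elim(1) Pp by (metis ln_exp ln_le_cancel_iff exp_gt_zero)
    hence "c - e \<le> ln (P n) / real n" using elim(2) by (simp add: field_simps)
    thus ?case using pval_pos[OF elim(2) Pp] by simp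
  qed
  hence "ereal (c - e) \<le> liminf (\<lambda>n. ereal (1 / real n) * ln_ereal (P n))" by (rule Liminf_bounded)
  thus "ereal c \<le> liminf (\<lambda>n. ereal (1 / real n) * ln_ereal (P n)) + ereal e"
    by (cases "liminf (\<lambda>n. ereal (1 / real n) * ln_ereal (P n))") auto
qed

lemma ubE_limsup:
  assumes "ubE P c"
  shows "limsup (\<lambda>n. ereal (1 / real n) * ln_ereal (P n)) \<le> ereal c"
proof (rule ereal_le_epsilon2)
  fix e :: real assume e: "0 < e"
  have "\<forall>\<^sub>F n in sequentially. P n \<le> exp (real n * (c + e))" using assms e by (auto simp: ubE_def)
  hence "\<forall>\<^sub>F n in sequentially. ereal (1 / real n) * ln_ereal (P n) \<le> ereal (c + e)"
    using eventually_ge_at_top[of 1]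
  proof eventually_elim
    case (elim n)
    show ?case
    proof (cases "0 < P n")
      case True
      have "ln (P n) \<le> real n * (c + e)" using elim(1) True by (metis ln_exp ln_le_cancel_iff exp_gt_zero)
      hence "ln (P n) / real n \<le> c + e" using elim(2) by (simp add: field_simps)
      thus ?thesis using pval_pos[OF elim(2) True] by simp
    next
      case False hence "P n \<le> 0" by simp
      thus ?thesis using pval_nonpos[OF elim(2), of "P n"] by simp
    qed
  qed
  hence "limsup (\<lambda>n. ereal (1 / real n) * ln_ereal (P n)) \<le> ereal (c + e)" by (rule Limsup_bounded)
  thus "limsup (\<lambda>n. ereal (1 / real n) * ln_ereal (P n)) \<le> ereal c + ereal e" by simp
qed

lemma le1_limsup:
  assumes "\<And>n. P n \<le> 1"
  shows "limsup (\<lambda>n. ereal (1 / real n) * ln_ereal (P n)) \<le> 0"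
proof -
  have "\<forall>\<^sub>F n in sequentially. ereal (1 / real n) * ln_ereal (P n) \<le> 0"
    using eventually_ge_at_top[of 1]
  proof eventually_elim
    case (elim n)
    show ?case
    proof (cases "0 < P n")
      case True
      have "ln (P n) \<le> 0" using assms[of n] True by simp
      thus ?thesis using pval_pos[OF elim True] elim by (simp add: divide_nonpos_pos)
    next
      case False hence "P n \<le> 0" by simp
      thus ?thesis using pval_nonpos[OF elim, of "P n"] by simp
    qed
  qed
  thus ?thesis by (rule Limsup_bounded)
qed

lemma lbE_div:
  assumes "lbE f a" "ubE g b" "\<forall>\<^sub>F n in sequentially. 0 < g n"
  shows "lbE (\<lambda>n. f n / g n) (a - b)"
  unfolding lbE_def
proof (intro allI impI)
  fix \<eta> :: real assume e: "0 < \<eta>"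
  have e2: "0 < \<eta>/2" using e by simp
  have "\<forall>\<^sub>F n in sequentially. exp (real n * (a - \<eta>/2)) \<le> f n" using assms(1) e2 by (auto simp: lbE_def)
  moreover have "\<forall>\<^sub>F n in sequentially. g n \<le> exp (real n * (b + \<eta>/2))" using assms(2) e2 by (auto simp: ubE_def)
  ultimately show "\<forall>\<^sub>F n in sequentially. exp (real n * (a - b - \<eta>)) \<le> f n / g n"
    using assms(3)
  proof eventually_elim
    case (elim n)
    have "exp (real n * (a - b - \<eta>)) = exp (real n * (a - \<eta>/2)) / exp (real n * (b + \<eta>/2))"
      by (simp add: exp_diff[symmetric] algebra_simps)
    also have "\<dots> \<le> f n / exp (real n * (b + \<eta>/2))" using elim(1) by (simp add: divide_right_mono)
    also have "\<dots> \<le> f n / g n" using elim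
      by (intro divide_left_mono) (auto intro: order_trans[OF _ elim(1)])
    finally show ?case .
  qed
qed

context lag
begin

lemma Kn_sq: "(Kn m \<rho> \<alpha> n x)\<^sup>2 = (exp (real n * \<rho>) / ((real m - 1 + real n / 2) gchoose (m - 1)))\<^sup>2 * G n x"
proof -
  have e: "(exp (- (sqnorm n x / \<alpha>^2) / real m))\<^sup>2 = exp (- c0 * sqnorm n x)"
    unfolding c0_def power2_eq_square exp_add[symmetric] by (simp add: field_simps)
  show ?thesis unfolding Kn_def G_def Lg_def
    by (simp only: power_mult_distrib e)
qed

lemma prob_eq:
  assumes n: "1 \<le> n" and ps: "prob_space Mn"
    and dist: "distributed Mn (Rn n) Xn (\<lambda>x. ennreal ((Kn m \<rho> \<alpha> n x)\<^sup>2 / (\<integral>y. (Kn m \<rho> \<alpha> n y)\<^sup>2 \<partial>Rn n)))"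
    and T: "T \<in> sets borel"
  shows "measure Mn {\<omega> \<in> space Mn. sqnorm n (Xn \<omega>) / real n \<in> T} = N n T / N n UNIV"
    and "0 < N n UNIV"
proof -
  define E where "E = exp (real n * \<rho>) / ((real m - 1 + real n / 2) gchoose (m - 1))"
  define Zb where "Zb = (\<integral>y. (Kn m \<rho> \<alpha> n y)\<^sup>2 \<partial>Rn n)"
  define w where "w = E\<^sup>2 / Zb"
  have Zb: "0 \<le> Zb" unfolding Zb_def by simp
  have w: "0 \<le> w" unfolding w_def using Zb by simp
  have f: "(\<lambda>x. ennreal ((Kn m \<rho> \<alpha> n x)\<^sup>2 / Zb)) = (\<lambda>x. ennreal (w * G n x))"
    unfolding Kn_sq w_def E_def by (simp add: field_simps)
  have D: "distr Mn (Rn n) Xn = density (Rn n) (\<lambda>x. ennreal (w * G n x))"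
    and Xm: "Xn \<in> measurable Mn (Rn n)"
    using dist unfolding distributed_def Zb_def[symmetric] f by auto
  have gen: "measure Mn (Xn -` {x \<in> space (Rn n). sqnorm n x / real n \<in> B} \<inter> space Mn) = w * N n B"
    if B: "B \<in> sets borel" for B
  proof -
    define EB where "EB = {x \<in> space (Rn n). sqnorm n x / real n \<in> B}"
    have EB: "EB \<in> sets (Rn n)" unfolding EB_def using B by measurable
    have "measure Mn (Xn -` EB \<inter> space Mn) = measure (distr Mn (Rn n) Xn) EB"
      by (rule measure_distr[OF Xm EB, symmetric])
    also have "\<dots> = enn2real (emeasure (density (Rn n) (\<lambda>x. ennreal (w * G n x))) EB)"
      unfolding D measure_def ..
    also have "emeasure (density (Rn n) (\<lambda>x. ennreal (w * G n x))) EB = (\<integral>\<^sup>+ x. ennreal (w * G n x) * indicator EB x \<partial>Rn n)"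
      by (rule emeasure_density) (use EB in auto)
    also have "\<dots> = (\<integral>\<^sup>+ x. ennreal w * ennreal (indicator B (sqnorm n x / real n) * G n x) \<partial>Rn n)"
      by (intro nn_integral_cong) (auto simp: EB_def indicator_def ennreal_mult w G_nonneg)
    also have "\<dots> = ennreal w * NI n B" unfolding NI_def
      by (rule nn_integral_cmult) (use B in measurable)
    finally show ?thesis unfolding EB_def N_def using w by (simp add: enn2real_mult)
  qed
  have "Xn -` {x \<in> space (Rn n). sqnorm n x / real n \<in> UNIV} \<inter> space Mn = space Mn"
    using measurable_space[OF Xm] by auto
  hence "1 = w * N n UNIV" using gen[of UNIV] prob_space.prob_space[OF ps] by simp
  hence wN: "w * N n UNIV = 1" by simp
  have Npos: "0 < N n UNIV" using wN w by (metis less_eq_real_def mult_zero_right N_def enn2real_nonneg zero_neq_one)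
  show "0 < N n UNIV" by (rule Npos)
  have winv: "w = 1 / N n UNIV" using wN Npos by (simp add: field_simps)
  have "{\<omega> \<in> space Mn. sqnorm n (Xn \<omega>) / real n \<in> T} = Xn -` {x \<in> space (Rn n). sqnorm n x / real n \<in> T} \<inter> space Mn"
    using measurable_space[OF Xm] by auto
  thus "measure Mn {\<omega> \<in> space Mn. sqnorm n (Xn \<omega>) / real n \<in> T} = N n T / N n UNIV"
    using gen[OF T] winv by simp
qed

end

context lag
begin

definition R :: "real \<Rightarrow> real" where "R x = ln (pi / c0) / 2 - phi (x\<^sup>2)"

lemma R_alt: "0 < x \<Longrightarrow> R x = c0 * x\<^sup>2 - 1/2 - ln (2 * c0 * x\<^sup>2) / 2"
proof -
  assume x: "0 < x"
  have "ln (pi / c0) - ln (2 * pi * x\<^sup>2) = - ln (2 * c0 * x\<^sup>2)"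
    using x c0pos by (simp add: ln_div ln_mult)
  thus ?thesis unfolding R_def phi_def by (simp add: field_simps)
qed

lemma rate_eq: "0 < x \<Longrightarrow> rate m \<alpha> x = ereal (R x)"
proof -
  assume x: "0 < x"
  have "ln (\<alpha>^2 * real m / (4 * x^2)) = - ln (2 * c0 * x\<^sup>2)"
  proof -
    have "\<alpha>^2 * real m / (4 * x^2) = 1 / (2 * c0 * x\<^sup>2)" unfolding c0_def using apos m1 x by (simp add: field_simps)
    thus ?thesis using x c0pos by (simp add: ln_div)
  qed
  moreover have "2 * x^2 / (\<alpha>^2 * real m) = c0 * x\<^sup>2" unfolding c0_def by simp
  ultimately show ?thesis unfolding rate_def R_alt[OF x] using x by simp
qed

lemma rate_nonpos: "x \<le> 0 \<Longrightarrow> rate m \<alpha> x = \<infinity>"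
  unfolding rate_def by simp

lemma R_sigma: "R (sqrt (1 / (2 * c0))) = 0"
  using c0pos by (subst R_alt) (auto simp: field_simps)

lemma R_small:
  fixes K :: real assumes K: "0 \<le> K"
  defines "b0 \<equiv> exp (- 2 * K - 2) / (2 * c0)"
  shows "0 < b0" "b0 < 1 / (2 * c0)" "K < R (sqrt b0)"
proof -
  show b0: "0 < b0" unfolding b0_def using c0pos by simp
  have "exp (- 2 * K - 2) < 1" using K by simp
  thus "b0 < 1 / (2 * c0)" unfolding b0_def using c0pos by (simp add: divide_strict_right_mono)
  have "ln (2 * c0 * b0) = - 2 * K - 2" unfolding b0_def using c0pos by simp
  hence "R (sqrt b0) = c0 * b0 + K + 1/2" using b0 by (simp add: R_alt field_simps)
  moreover have "0 < c0 * b0" using b0 c0pos by simp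
  ultimately show "K < R (sqrt b0)" by simp
qed

lemma R_large:
  assumes b: "0 < b" shows "c0 * b / 2 - ln 2 / 2 \<le> R (sqrt b)"
proof -
  have "ln (2 * c0 * b) = ln 2 + ln (c0 * b)" using b c0pos by (simp add: ln_mult)
  moreover have "ln (c0 * b) \<le> c0 * b - 1" using b c0pos by (intro ln_le_minus_one) simp
  ultimately show ?thesis using b by (simp add: R_alt field_simps)
qed

lemma R_big:
  fixes K :: real assumes K: "0 \<le> K"
  defines "b2 \<equiv> (4 * K + 5) / (2 * c0)"
  shows "1 / (2 * c0) < b2" "K < R (sqrt b2)"
proof -
  show "1 / (2 * c0) < b2" unfolding b2_def using K c0pos by (simp add: divide_strict_right_mono)
  have b2: "0 < b2" unfolding b2_def using K c0pos by simp
  have "c0 * b2 / 2 = K + 5/4" unfolding b2_def using c0pos by (simp add: field_simps)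
  moreover have "ln 2 < (1::real)" by (rule ln_2_less_1)
  ultimately show "K < R (sqrt b2)" using R_large[OF b2] by linarith
qed

end

context lag
begin

lemma R_sqrt: "0 \<le> b \<Longrightarrow> phi b - ln (pi / c0) / 2 = - R (sqrt b)"
  unfolding R_def by simp

lemma ubE_le1:
  assumes "\<forall>\<^sub>F n in sequentially. P n \<le> 1"
  shows "ubE P 0"
  unfolding ubE_def
proof (intro allI impI)
  fix \<eta> :: real assume "0 < \<eta>"
  show "\<forall>\<^sub>F n in sequentially. P n \<le> exp (real n * (0 + \<eta>))"
    using assms
  proof eventually_elim
    case (elim n)
    have "1 \<le> exp (real n * (0 + \<eta>))" using \<open>0 < \<eta>\<close> by simp
    thus ?case using elim by linarith
  qed
qed

lemma split_upper:
  fixes F :: "real set" and K :: real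
  assumes F: "closed F" and K: "0 \<le> K" and Kr: "\<And>x. x \<in> F \<Longrightarrow> ereal K < rate m \<alpha> x"
  defines "\<sigma> \<equiv> sqrt (1 / (2 * c0))"
  shows "\<exists>b1 b2. 0 < b1 \<and> b1 < 1 / (2 * c0) \<and> K < R (sqrt b1) \<and> 1 / (2 * c0) < b2 \<and> K < R (sqrt b2) \<and>
     (\<forall>y\<in>F. (y \<le> \<sigma> \<longrightarrow> y \<le> sqrt b1) \<and> (\<sigma> \<le> y \<longrightarrow> sqrt b2 \<le> y))"
proof -
  have spos: "0 < \<sigma>" unfolding \<sigma>_def using c0pos by simp
  have s2: "\<sigma>\<^sup>2 = 1 / (2 * c0)" unfolding \<sigma>_def using c0pos by simp
  have sF: "\<sigma> \<notin> F"
  proof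
    assume "\<sigma> \<in> F"
    hence "ereal K < rate m \<alpha> \<sigma>" by (rule Kr)
    also have "rate m \<alpha> \<sigma> = 0" using rate_eq[OF spos] R_sigma unfolding \<sigma>_def by simp
    finally show False using K by simp
  qed
  have Rpos: "K < R a" if "a \<in> F" "0 < a" for a
    using Kr[OF that(1)] rate_eq[OF that(2)] by simp
  obtain b1 where b1: "0 < b1" "b1 < 1 / (2 * c0)" "K < R (sqrt b1)" "\<forall>y\<in>F. y \<le> \<sigma> \<longrightarrow> y \<le> sqrt b1"
  proof (cases "F \<inter> {..\<sigma>} \<noteq> {} \<and> 0 < Sup (F \<inter> {..\<sigma>})")
    case True
    define a where "a = Sup (F \<inter> {..\<sigma>})"
    have bdd: "bdd_above (F \<inter> {..\<sigma>})" by (rule bdd_aboveI[of _ \<sigma>]) auto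
    have aF: "a \<in> F \<inter> {..\<sigma>}" unfolding a_def
      using True bdd F by (intro closed_contains_Sup) auto
    have apos: "0 < a" using True unfolding a_def by simp
    have "a \<noteq> \<sigma>" using aF sF by auto
    hence alt: "a < \<sigma>" using aF by auto
    show ?thesis
    proof (rule that[of "a\<^sup>2"])
      show "0 < a\<^sup>2" using apos by simp
      have "a\<^sup>2 < \<sigma>\<^sup>2" using alt apos by (intro power_strict_mono) auto
      thus "a\<^sup>2 < 1 / (2 * c0)" using s2 by simp
      show "K < R (sqrt (a\<^sup>2))" using Rpos[of a] aF apos by simp
      show "\<forall>y\<in>F. y \<le> \<sigma> \<longrightarrow> y \<le> sqrt (a\<^sup>2)"
        using apos bdd unfolding a_def by (auto intro: cSup_upper)
    qed
  next
    case False
    define b0 where "b0 = exp (- 2 * K - 2) / (2 * c0)"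
    note bs = R_small[OF K, folded b0_def]
    show ?thesis
    proof (rule that[of b0])
      show "0 < b0" "b0 < 1 / (2 * c0)" "K < R (sqrt b0)" using bs by auto
      show "\<forall>y\<in>F. y \<le> \<sigma> \<longrightarrow> y \<le> sqrt b0"
      proof (intro ballI impI)
        fix y assume y: "y \<in> F" "y \<le> \<sigma>"
        have bdd: "bdd_above (F \<inter> {..\<sigma>})" by (rule bdd_aboveI[of _ \<sigma>]) auto
        have ne: "F \<inter> {..\<sigma>} \<noteq> {}" using y by auto
        hence "Sup (F \<inter> {..\<sigma>}) \<le> 0" using False by auto
        moreover have "y \<le> Sup (F \<inter> {..\<sigma>})" using y bdd by (auto intro: cSup_upper)
        moreover have "0 < sqrt b0" using bs by simp
        ultimately show "y \<le> sqrt b0" by linarith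
      qed
    qed
  qed
  obtain b2 where b2: "1 / (2 * c0) < b2" "K < R (sqrt b2)" "\<forall>y\<in>F. \<sigma> \<le> y \<longrightarrow> sqrt b2 \<le> y"
  proof (cases "F \<inter> {\<sigma>..} \<noteq> {}")
    case True
    define a where "a = Inf (F \<inter> {\<sigma>..})"
    have bdd: "bdd_below (F \<inter> {\<sigma>..})" by (rule bdd_belowI[of _ \<sigma>]) auto
    have aF: "a \<in> F \<inter> {\<sigma>..}" unfolding a_def
      using True bdd F by (intro closed_contains_Inf) auto
    have "a \<noteq> \<sigma>" using aF sF by auto
    hence agt: "\<sigma> < a" using aF by auto
    have apos: "0 < a" using agt spos by linarith
    show ?thesis
    proof (rule that[of "a\<^sup>2"])
      have "\<sigma>\<^sup>2 < a\<^sup>2" using agt spos by (intro power_strict_mono) auto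
      thus "1 / (2 * c0) < a\<^sup>2" using s2 by simp
      show "K < R (sqrt (a\<^sup>2))" using Rpos[of a] aF apos by simp
      show "\<forall>y\<in>F. \<sigma> \<le> y \<longrightarrow> sqrt (a\<^sup>2) \<le> y"
        using apos bdd unfolding a_def by (auto intro: cInf_lower)
    qed
  next
    case False
    define b0 where "b0 = (4 * K + 5) / (2 * c0)"
    note bs = R_big[OF K, folded b0_def]
    show ?thesis by (rule that[of b0]) (use bs False in auto)
  qed
  show ?thesis using b1 b2 by blast
qed

end

context lag
begin

theorem LDP_main:
  fixes \<rho> :: real and M :: "nat \<Rightarrow> 'a measure" and X :: "nat \<Rightarrow> 'a \<Rightarrow> (nat \<Rightarrow> real)"
  assumes prob: "\<And>n. n \<ge> 1 \<Longrightarrow> prob_space (M n)"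
    and dens: "\<And>n. n \<ge> 1 \<Longrightarrow> distributed (M n) (Rn n) (X n)
        (\<lambda>x. ennreal ((Kn m \<rho> \<alpha> n x)^2 / (\<integral>y. (Kn m \<rho> \<alpha> n y)^2 \<partial>Rn n)))"
  shows "LDP M (\<lambda>n \<omega>. sqrt (sqnorm n (X n \<omega>)) / sqrt (real n)) (rate m \<alpha>)"
  unfolding LDP_def Let_def
proof (intro ballI conjI)
  fix A :: "real set" assume A: "A \<in> sets borel"
  define P where "P n = measure (M n) {\<omega> \<in> space (M n). sqrt (sqnorm n (X n \<omega>)) / sqrt (real n) \<in> A}" for n
  define pP where "pP n = ereal (1 / real n) * ln_ereal (P n)" for n
  define T where "T = {v. sqrt v \<in> A}"
  have T: "T \<in> sets borel" unfolding T_def using A by measurable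
  define Q where "Q n = N n T / N n UNIV" for n
  have PQ: "P n = Q n" if n: "1 \<le> n" for n
  proof -
    have "{\<omega> \<in> space (M n). sqrt (sqnorm n (X n \<omega>)) / sqrt (real n) \<in> A}
        = {\<omega> \<in> space (M n). sqnorm n (X n \<omega>) / real n \<in> T}"
      unfolding T_def by (simp add: real_sqrt_divide)
    thus ?thesis unfolding P_def Q_def using prob_eq(1)[OF n prob[OF n] dens[OF n] T] by simp
  qed
  have Zpos: "\<forall>\<^sub>F n in sequentially. 0 < N n UNIV"
    using eventually_ge_at_top[of 1]
    by eventually_elim (rule prob_eq(2)[OF _ prob dens], auto)
  have evPQ: "\<forall>\<^sub>F n in sequentially. P n = Q n"
    using eventually_ge_at_top[of 1] by eventually_elim (rule PQ)
  have evQP: "\<forall>\<^sub>F n in sequentially. Q n \<le> P n" "\<forall>\<^sub>F n in sequentially. P n \<le> Q n"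
    using evPQ by (auto elim: eventually_mono)
  have P1: "\<forall>\<^sub>F n in sequentially. P n \<le> 1"
    using eventually_ge_at_top[of 1]
    by eventually_elim (unfold P_def, rule prob_space.prob_le_1[OF prob], auto)

  have lowpt: "- rate m \<alpha> x \<le> liminf pP" if xA: "x \<in> interior A" for x
  proof (cases "x \<le> 0")
    case True thus ?thesis by (simp add: rate_nonpos)
  next
    case False
    hence x: "0 < x" by simp
    obtain e where e: "0 < e" "ball x e \<subseteq> A" using xA unfolding mem_interior by blast
    define t where "t = x\<^sup>2"
    have tpos: "0 < t" unfolding t_def using x by simp
    define \<delta>0 where "\<delta>0 = min (t/2) (e * x)"
    have d0: "0 < \<delta>0" unfolding \<delta>0_def using tpos e x by simp
    have sub: "{t - \<delta>0<..<t + \<delta>0} \<subseteq> T"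
    proof
      fix v assume v: "v \<in> {t - \<delta>0<..<t + \<delta>0}"
      have d0le: "\<delta>0 \<le> t/2" "\<delta>0 \<le> e * x" unfolding \<delta>0_def by auto
      have vpos: "0 < v" using v d0le by auto
      have vt: "\<bar>v - t\<bar> < e * x" using v d0le by auto
      have "(sqrt v - x) * (sqrt v + x) = v - t" unfolding t_def using vpos
        by (simp add: algebra_simps power2_eq_square)
      hence "\<bar>v - t\<bar> = \<bar>sqrt v - x\<bar> * \<bar>sqrt v + x\<bar>" by (metis abs_mult)
      moreover have "\<bar>sqrt v + x\<bar> = sqrt v + x" using vpos x by simp
      ultimately have "\<bar>sqrt v - x\<bar> * (sqrt v + x) = \<bar>v - t\<bar>" by simp
      moreover have "\<bar>sqrt v - x\<bar> * x \<le> \<bar>sqrt v - x\<bar> * (sqrt v + x)" using vpos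
        by (intro mult_left_mono) auto
      ultimately have "\<bar>sqrt v - x\<bar> * x < e * x" using vt by linarith
      hence "\<bar>sqrt v - x\<bar> < e" using x by simp
      hence "sqrt v \<in> ball x e" by (simp add: dist_real_def abs_minus_commute)
      thus "v \<in> T" using e unfolding T_def by auto
    qed
    have ev1: "\<forall>\<^sub>F n in sequentially. N n {t - \<delta>0<..<t + \<delta>0} \<le> N n T"
      using eventually_ge_at_top[of 1] by eventually_elim (rule N_mono[OF _ sub])
    have l1: "lbE (\<lambda>n. N n T) (phi t)" by (rule lbE_mono[OF ev1 LBpt[OF tpos d0] order_refl])
    have l2: "lbE (\<lambda>n. N n T / N n UNIV) (phi t - ln (pi / c0) / 2)"
      by (rule lbE_div[OF l1 UZ Zpos])
    have l3: "lbE P (phi t - ln (pi / c0) / 2)"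
      by (rule lbE_mono[OF evQP(1) _ order_refl]) (use l2 in \<open>simp add: Q_def\<close>)
    have "phi t - ln (pi / c0) / 2 = - R x" unfolding t_def R_def by simp
    hence "ereal (- R x) \<le> liminf pP" using lbE_liminf[OF l3] unfolding pP_def by simp
    thus ?thesis using rate_eq[OF x] by simp
  qed
  have "- liminf pP \<le> (INF x\<in>interior A. rate m \<alpha> x)"
    by (rule INF_greatest) (use lowpt in \<open>simp add: ereal_uminus_le_reorder\<close>)
  thus "- (INF x\<in>interior A. rate m \<alpha> x) \<le> liminf (\<lambda>n. ereal (1 / real n) * ln_ereal (measure (M n) {\<omega> \<in> space (M n). sqrt (sqnorm n (X n \<omega>)) / sqrt (real n) \<in> A}))"
    unfolding pP_def[symmetric, unfolded P_def] P_def[symmetric] pP_def[symmetric]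
    by (simp add: ereal_uminus_le_reorder)
  show "liminf (\<lambda>n. ereal (1 / real n) * ln_ereal (measure (M n) {\<omega> \<in> space (M n). sqrt (sqnorm n (X n \<omega>)) / sqrt (real n) \<in> A}))
     \<le> limsup (\<lambda>n. ereal (1 / real n) * ln_ereal (measure (M n) {\<omega> \<in> space (M n). sqrt (sqnorm n (X n \<omega>)) / sqrt (real n) \<in> A}))"
    by (rule Liminf_le_Limsup) simp

  define F where "F = closure A"
  have Fc: "closed F" unfolding F_def by simp
  have AF: "A \<subseteq> F" unfolding F_def by (rule closure_subset)
  have key: "limsup pP \<le> ereal (- K)" if K: "ereal K < (INF x\<in>F. rate m \<alpha> x)" for K
  proof (cases "K < 0")
    case True
    have "limsup pP \<le> ereal 0" unfolding pP_def by (rule ubE_limsup[OF ubE_le1[OF P1]])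
    thus ?thesis using True by (simp add: order_trans)
  next
    case False
    hence K0: "0 \<le> K" by simp
    have Kr: "ereal K < rate m \<alpha> x" if "x \<in> F" for x using less_INF_D[OF K that] .
    define \<sigma> where "\<sigma> = sqrt (1 / (2 * c0))"
    obtain b1 b2 where b: "0 < b1" "b1 < 1 / (2 * c0)" "K < R (sqrt b1)" "1 / (2 * c0) < b2" "K < R (sqrt b2)"
      and bF: "\<forall>y\<in>F. (y \<le> \<sigma> \<longrightarrow> y \<le> sqrt b1) \<and> (\<sigma> \<le> y \<longrightarrow> sqrt b2 \<le> y)"
      using split_upper[OF Fc K0 Kr] unfolding \<sigma>_def by blast
    have b2pos: "0 < b2" using b(4) c0pos by (smt (verit) divide_pos_pos)
    have indle: "(indicator T v :: real) \<le> indicator {..b1} v + indicator {b2..} v" if v: "0 \<le> v" for v :: real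
    proof (cases "v \<in> T")
      case True
      hence "sqrt v \<in> F" using AF unfolding T_def by auto
      hence "(sqrt v \<le> \<sigma> \<longrightarrow> sqrt v \<le> sqrt b1) \<and> (\<sigma> \<le> sqrt v \<longrightarrow> sqrt b2 \<le> sqrt v)" using bF by blast
      hence "v \<le> b1 \<or> b2 \<le> v" by (auto simp: real_sqrt_le_iff)
      thus ?thesis by (auto simp: indicator_def)
    qed (auto simp: indicator_def)
    have NT: "N n T \<le> N n {..b1} + N n {b2..}" if n: "1 \<le> n" for n
    proof -
      have "NI n T \<le> (\<integral>\<^sup>+x. ennreal (indicator {..b1} (sqnorm n x / real n) * G n x)
          + ennreal (indicator {b2..} (sqnorm n x / real n) * G n x) \<partial>Rn n)"
        unfolding NI_def
      proof (intro nn_integral_mono)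
        fix x
        have v: "0 \<le> sqnorm n x / real n" by (simp add: sqnorm_nonneg)
        have "indicator T (sqnorm n x / real n) * G n x \<le> (indicator {..b1} (sqnorm n x / real n) + indicator {b2..} (sqnorm n x / real n)) * G n x"
          using indle[OF v] G_nonneg by (intro mult_right_mono) auto
        hence "ennreal (indicator T (sqnorm n x / real n) * G n x) \<le> ennreal (indicator {..b1} (sqnorm n x / real n) * G n x + indicator {b2..} (sqnorm n x / real n) * G n x)"
          by (intro ennreal_leI) (simp add: algebra_simps)
        thus "ennreal (indicator T (sqnorm n x / real n) * G n x) \<le> ennreal (indicator {..b1} (sqnorm n x / real n) * G n x) + ennreal (indicator {b2..} (sqnorm n x / real n) * G n x)"
          using G_nonneg by (simp add: ennreal_plus)
      qed
      also have "\<dots> = NI n {..b1} + NI n {b2..}" unfolding NI_def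
        by (rule nn_integral_add) auto
      finally have le: "NI n T \<le> NI n {..b1} + NI n {b2..}" .
      have "N n T \<le> enn2real (NI n {..b1} + NI n {b2..})"
        unfolding N_def by (rule enn2real_mono[OF le]) (use NI_finite[OF n] in simp)
      also have "\<dots> = N n {..b1} + N n {b2..}" unfolding N_def
        by (rule enn2real_plus) (use NI_finite[OF n] in auto)
      finally show ?thesis .
    qed
    define c where "c = max (phi b1) (phi b2)"
    have u1: "ubE (\<lambda>n. N n {..b1}) c"
      by (rule ubE_mono[OF _ Ulo]) (use b c0pos in \<open>auto simp: c_def field_simps\<close>)
    have u2: "ubE (\<lambda>n. N n {b2..}) c"
      by (rule ubE_mono[OF _ Uhi]) (use b b2pos c0pos in \<open>auto simp: c_def field_simps\<close>)
    have evNT: "\<forall>\<^sub>F n in sequentially. N n T \<le> N n {..b1} + N n {b2..}"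
      using eventually_ge_at_top[of 1] by eventually_elim (rule NT)
    have u3: "ubE (\<lambda>n. N n T) c"
      by (rule ubE_mono[OF evNT ubE_add[OF u1 u2] order_refl])
    have u4: "ubE (\<lambda>n. N n T / N n UNIV) (c - ln (pi / c0) / 2)" by (rule ubE_div[OF u3 LZ])
    have u5: "ubE P (c - ln (pi / c0) / 2)"
      by (rule ubE_mono[OF evQP(2) _ order_refl]) (use u4 in \<open>simp add: Q_def\<close>)
    have "c - ln (pi / c0) / 2 = max (- R (sqrt b1)) (- R (sqrt b2))"
      unfolding c_def using R_sqrt[of b1] R_sqrt[of b2] b(1) b2pos by (simp add: max_diff_distrib_left)
    hence "c - ln (pi / c0) / 2 < - K" using b(3,5) by simp
    moreover have "limsup pP \<le> ereal (c - ln (pi / c0) / 2)" unfolding pP_def by (rule ubE_limsup[OF u5])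
    ultimately show ?thesis by (meson ereal_less_eq(3) less_imp_le order_trans)
  qed
  have "limsup pP \<le> - (INF x\<in>F. rate m \<alpha> x)"
  proof (rule ccontr)
    assume "\<not> limsup pP \<le> - (INF x\<in>F. rate m \<alpha> x)"
    hence "- (INF x\<in>F. rate m \<alpha> x) < limsup pP" by simp
    hence "- limsup pP < (INF x\<in>F. rate m \<alpha> x)" by (simp add: ereal_uminus_less_reorder)
    then obtain K where K1: "- limsup pP < ereal K" and K2: "ereal K < (INF x\<in>F. rate m \<alpha> x)"
      using ereal_dense2 by blast
    have "limsup pP \<le> ereal (- K)" by (rule key[OF K2])
    hence "ereal K \<le> - limsup pP" using ereal_minus_le_minus[of "ereal (-K)" "limsup pP"] by simp
    thus False using K1 by simp
  qed
  thus "limsup (\<lambda>n. ereal (1 / real n) * ln_ereal (measure (M n) {\<omega> \<in> space (M n). sqrt (sqnorm n (X n \<omega>)) / sqrt (real n) \<in> A}))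
     \<le> - (INF x\<in>closure A. rate m \<alpha> x)"
    unfolding pP_def P_def F_def .
qed

end

theorem lemma4p1:
  fixes m :: nat and \<rho> \<alpha> :: real
    and M :: "nat \<Rightarrow> 'a measure" and X :: "nat \<Rightarrow> 'a \<Rightarrow> (nat \<Rightarrow> real)"
  assumes m_pos: "m \<ge> 1"
    and \<alpha>_pos: "0 < \<alpha>"
    and \<alpha>_bound: "\<alpha> < exp (- \<rho>) / sqrt (real m * pi)"
    and prob: "\<And>n. n \<ge> 1 \<Longrightarrow> prob_space (M n)"
    and dens: "\<And>n. n \<ge> 1 \<Longrightarrow> distributed (M n) (Rn n) (X n)
        (\<lambda>x. ennreal ((Kn m \<rho> \<alpha> n x)^2 / (\<integral>y. (Kn m \<rho> \<alpha> n y)^2 \<partial>Rn n)))"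
  shows "LDP M (\<lambda>n \<omega>. sqrt (sqnorm n (X n \<omega>)) / sqrt (real n)) (rate m \<alpha>)"
proof -
  interpret lag m \<alpha> using m_pos \<alpha>_pos by unfold_locales
  show ?thesis by (rule LDP_main[OF prob dens])
qed

end
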